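(* Let $g:[a,b]\to\mathbb R$ be a derivator. Then ${\rm P}_g$ is dense in $\mathrm{UC}_g([a,b])$ if and only if, for every $x\in D_g$, the indicator function $1_{\{x\}}$ (equal to $1$ at $x$ and $0$ elsewhere) belongs to the closure of ${\rm P}_g$ in $L^2_g([a,b])$.
   Context: $\mathbb F\in\{\mathbb R,\mathbb C\}$. A derivator is a nondecreasing, left-continuous $g:[a,b]\to\mathbb R$; $\mu_g$ is its Lebesgue–Stieltjes measure ($\mu_g([c,d))=g(d)-g(c)$). For $x\in[a,b)$, $\Delta g(x)=g(x^+)-g(x)$ and $D_g=\{x\in[a,b):\Delta g(x)>0\}$. For $x_0\in[a,b]$, the $g$-monomials centered at $x_0$ are $g_{x_0,0}\equiv1$, $g_{x_0,n}(x)=n\int_{[x_0,x)}g_{x_0,n-1}\,d\mu_g$ for $x\ge x_0$ and $g_{x_0,n}(x)=-n\int_{[x,x_0)}g_{x_0,n-1}\,d\mu_g$ for $x<x_0$. ${\rm P}_g$ is the space of finite $\mathbb F$-linear combinations of $g$-monomials. $L^2_g([a,b])$ is the Hilbert space of $\mu_g$-measurable $f$ with $\int_{[a,b)}|f|^2d\mu_g<\infty$. $\mathrm{UC}_g([a,b])$ is the Banach space (supremum norm) of uniformly $g$-continuous functions: for every $\varepsilon>0$ there is $\delta>0$ with $|g(x)-g(y)|<\delta\Rightarrow|f(x)-f(y)|<\varepsilon$ for all $x,y\in[a,b]$. *)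

theory Defs
  imports "HOL-Analysis.Analysis"
begin

definition derivator :: "real \<Rightarrow> real \<Rightarrow> (real \<Rightarrow> real) \<Rightarrow> bool" where
  "derivator a b g \<longleftrightarrow> mono_on {a..b} g \<and>
     (\<forall>x\<in>{a<..b}. (g \<longlongrightarrow> g x) (at_left x))"

text \<open>Extension of g outside [a,b] by constants (so that the measure lives on [a,b)).\<close>
definition gext :: "real \<Rightarrow> real \<Rightarrow> (real \<Rightarrow> real) \<Rightarrow> real \<Rightarrow> real" where
  "gext a b g x = g (max a (min b x))"

definition LS_measure :: "real \<Rightarrow> real \<Rightarrow> (real \<Rightarrow> real) \<Rightarrow> real measure" where
  "LS_measure a b g =
     extend_measure UNIV {(c, d). c \<le> d} (\<lambda>(c, d). {c..<d})
       (\<lambda>(c, d). ennreal (gext a b g d - gext a b g c))"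

fun gmono :: "real \<Rightarrow> real \<Rightarrow> (real \<Rightarrow> real) \<Rightarrow> real \<Rightarrow> nat \<Rightarrow> real \<Rightarrow> real" where
  "gmono a b g x0 0 = (\<lambda>x. 1)"
| "gmono a b g x0 (Suc n) = (\<lambda>x.
     if x0 \<le> x then real (Suc n) * set_lebesgue_integral (LS_measure a b g) {x0..<x} (gmono a b g x0 n)
     else - (real (Suc n) * set_lebesgue_integral (LS_measure a b g) {x..<x0} (gmono a b g x0 n)))"

definition Pg :: "real \<Rightarrow> real \<Rightarrow> (real \<Rightarrow> real) \<Rightarrow> (real \<Rightarrow> 'f::real_normed_field) set" where
  "Pg a b g = {p. \<exists>S c. finite S \<and> S \<subseteq> {a..b} \<times> UNIV \<and>
      p = (\<lambda>x. \<Sum>(x0, n)\<in>S. c (x0, n) * of_real (gmono a b g x0 n x))}"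

definition UCg :: "real \<Rightarrow> real \<Rightarrow> (real \<Rightarrow> real) \<Rightarrow> (real \<Rightarrow> 'f::real_normed_field) set" where
  "UCg a b g = {f. \<forall>\<epsilon>>0. \<exists>\<delta>>0. \<forall>x\<in>{a..b}. \<forall>y\<in>{a..b}.
      \<bar>g x - g y\<bar> < \<delta> \<longrightarrow> norm (f x - f y) < \<epsilon>}"

definition Pg_dense_UCg :: "real \<Rightarrow> real \<Rightarrow> (real \<Rightarrow> real) \<Rightarrow> 'f::real_normed_field itself \<Rightarrow> bool" where
  "Pg_dense_UCg a b g (TYPE('f)) \<longleftrightarrow>
     (\<forall>f \<in> (UCg a b g :: (real \<Rightarrow> 'f) set). \<forall>\<epsilon>>0. \<exists>p \<in> (Pg a b g :: (real \<Rightarrow> 'f) set).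
        (SUP x\<in>{a..b}. ereal (norm (f x - p x))) < ereal \<epsilon>)"

definition jump :: "(real \<Rightarrow> real) \<Rightarrow> real \<Rightarrow> real" where
  "jump g x = Lim (at_right x) g - g x"

definition Dg :: "real \<Rightarrow> real \<Rightarrow> (real \<Rightarrow> real) \<Rightarrow> real set" where
  "Dg a b g = {x \<in> {a..<b}. jump g x > 0}"

definition in_L2_closure_Pg :: "real \<Rightarrow> real \<Rightarrow> (real \<Rightarrow> real) \<Rightarrow> (real \<Rightarrow> 'f::real_normed_field) \<Rightarrow> bool" where
  "in_L2_closure_Pg a b g f \<longleftrightarrow>
     (\<forall>\<epsilon>>0. \<exists>p \<in> Pg a b g.
        (\<integral>\<^sup>+ x. ennreal ((norm (f x - p x))\<^sup>2 * indicator {a..<b} x) \<partial>LS_measure a b g) < ennreal \<epsilon>)"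

end

theory Submission
  imports Defs
begin

locale LS =
  fixes a b :: real and g :: "real \<Rightarrow> real"
  assumes der: "derivator a b g" and ab: "a \<le> b"
begin

abbreviation M where "M \<equiv> LS_measure a b g"
abbreviation G where "G \<equiv> gext a b g"

lemma g_mono: "x \<in> {a..b} \<Longrightarrow> y \<in> {a..b} \<Longrightarrow> x \<le> y \<Longrightarrow> g x \<le> g y"
  using der unfolding derivator_def mono_on_def by blast

lemma G_eq: "x \<in> {a..b} \<Longrightarrow> G x = g x"
  by (simp add: gext_def)

lemma G_mono: "mono G"
  unfolding mono_def gext_def using ab by (intro allI impI g_mono) auto

lemma G_le: "x \<le> y \<Longrightarrow> G x \<le> G y"
  using G_mono by (simp add: mono_def)

lemma G_left: "(G \<longlongrightarrow> G x) (at_left x)"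
proof (cases "x \<le> a")
  case True
  have "\<forall>\<^sub>F y in at_left x. G y = G x"
    unfolding eventually_at_left_field
    by (rule exI[of _ "x - 1"]) (use True in \<open>auto simp: gext_def\<close>)
  then show ?thesis by (simp add: tendsto_eventually)
next
  case False
  show ?thesis
  proof (cases "x \<le> b")
    case True
    with False have "(g \<longlongrightarrow> g x) (at_left x)" using der unfolding derivator_def by auto
    moreover have "\<forall>\<^sub>F y in at_left x. g y = G y"
      unfolding eventually_at_left_field
      by (rule exI[of _ a]) (use True False in \<open>auto simp: gext_def\<close>)
    ultimately show ?thesis using True False
      by (simp add: G_eq tendsto_cong)
  next
    case F2: False
    have "\<forall>\<^sub>F y in at_left x. G y = G x"
      unfolding eventually_at_left_field
      by (rule exI[of _ b]) (use F2 ab in \<open>auto simp: gext_def\<close>)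
    then show ?thesis by (simp add: tendsto_eventually)
  qed
qed

definition FF :: "real \<Rightarrow> real" where "FF x = - G (- x)"

lemma FF_mono: "x \<le> y \<Longrightarrow> FF x \<le> FF y"
  unfolding FF_def using G_le by simp

lemma FF_right: "continuous (at_right x) FF"
proof -
  have "((\<lambda>y. G y) \<longlongrightarrow> G (-x)) (at_left (-x))" by (rule G_left)
  then have "((\<lambda>y. G (- y)) \<longlongrightarrow> G (-x)) (at_right x)"
    by (simp add: at_left_minus filterlim_filtermap)
  then have "(FF \<longlongrightarrow> FF x) (at_right x)"
    unfolding FF_def by (intro tendsto_minus)
  then show ?thesis by (simp add: continuous_within)
qed

definition NN where "NN = distr (interval_measure FF) borel uminus"

lemma sets_NN: "sets NN = sets borel" by (simp add: NN_def)

lemma emeasure_NN: "c \<le> d \<Longrightarrow> emeasure NN {c..<d} = ennreal (G d - G c)"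
proof -
  assume cd: "c \<le> d"
  have "emeasure NN {c..<d} = emeasure (interval_measure FF) (uminus -` {c..<d})"
    unfolding NN_def by (subst emeasure_distr) auto
  also have "uminus -` {c..<d} = {-d<..-c}" by auto
  also have "emeasure (interval_measure FF) {-d<..-c} = FF (-c) - FF (-d)"
    using cd by (intro emeasure_interval_measure_Ioc FF_mono FF_right) auto
  finally show ?thesis by (simp add: FF_def)
qed

lemma sets_M: "sets M = sets borel"
  unfolding LS_measure_def
  apply (subst sets_extend_measure)
   apply auto[1]
  apply (simp add: borel_eq_atLeastLessThan)
  apply (rule sigma_sets_eqI)
   apply (auto simp: image_def split: prod.splits)
  subgoal for x y
  proof (cases "x \<le> y")
    case True then show ?thesis by (intro sigma_sets.Basic) auto
  next
    case False then have "{x..<y} = {}" by auto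
    then show ?thesis using sigma_sets.Empty by metis
  qed
  done

lemma space_M: "space M = UNIV"
  unfolding LS_measure_def by (simp add: space_extend_measure)

lemma measurable_M[measurable_cong]: "sets M = sets borel" by (rule sets_M)

lemma emeasure_Ico: "c \<le> d \<Longrightarrow> emeasure M {c..<d} = ennreal (G d - G c)"
  apply (rule emeasure_extend_measure_Pair[OF LS_measure_def, where \<mu>'="emeasure NN"])
  using emeasure_NN apply auto[1]
     apply auto[1]
  subgoal unfolding sets_M using emeasure_positive[of NN] sets_NN by simp
  subgoal unfolding sets_M using emeasure_countably_additive[of NN] sets_NN by simp
  by simp

lemma G_below: "y \<le> a \<Longrightarrow> G y = g a"
  using ab by (simp add: gext_def)
lemma G_above: "b \<le> y \<Longrightarrow> G y = g b"
  using ab by (simp add: gext_def)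

lemma null_out: "emeasure M (- {a..<b}) = 0"
proof -
  let ?N = "\<lambda>i::nat. {a - real i..<a} \<union> {b..<b + real i}"
  have "emeasure M (?N i) = 0" for i
  proof -
    have "emeasure M (?N i) \<le> emeasure M {a - real i..<a} + emeasure M {b..<b + real i}"
      by (intro emeasure_subadditive) (auto simp: sets_M)
    also have "\<dots> = 0" by (simp add: emeasure_Ico G_below G_above)
    finally show ?thesis by simp
  qed
  then have "emeasure M (\<Union>i. ?N i) = 0" by (intro emeasure_UN_eq_0) (auto simp: sets_M)
  moreover have "- {a..<b} \<subseteq> (\<Union>i. ?N i)"
  proof
    fix x assume "x \<in> - {a..<b}"
    then have "x < a \<or> b \<le> x" by auto
    obtain n :: nat where n: "\<bar>x\<bar> + \<bar>a\<bar> + \<bar>b\<bar> < real n" using reals_Archimedean2 by blast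
    then show "x \<in> (\<Union>i. ?N i)" using \<open>x < a \<or> b \<le> x\<close> by (intro UN_I[of n]) auto
  qed
  ultimately show ?thesis
    using emeasure_mono[of "- {a..<b}" "\<Union>i. ?N i" M] by (auto simp: sets_M)
qed

lemma emeasure_UNIV: "emeasure M UNIV = ennreal (g b - g a)"
proof -
  have "emeasure M UNIV = emeasure M {a..<b} + emeasure M (- {a..<b})"
    by (subst plus_emeasure) (auto simp: sets_M)
  also have "\<dots> = ennreal (g b - g a)" using null_out ab by (simp add: emeasure_Ico G_eq)
  finally show ?thesis .
qed

lemma finM: "finite_measure M"
  by (rule finite_measureI) (simp add: space_M emeasure_UNIV)

sublocale fm: finite_measure M by (rule finM)

lemma measure_Ico: "c \<le> d \<Longrightarrow> measure M {c..<d} = G d - G c"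
  using emeasure_Ico[of c d] G_le[of c d]
  by (simp add: fm.emeasure_eq_measure)

lemma measure_UNIV: "measure M UNIV = g b - g a"
  using emeasure_UNIV ab g_mono[of a b] by (simp add: fm.emeasure_eq_measure)

lemma AE_ab: "AE x in M. x \<in> {a..<b}"
  using null_out by (intro AE_I[of _ _ "- {a..<b}"]) (auto simp: sets_M)

lemma measure_le_T: "measure M A \<le> g b - g a"
  using fm.bounded_measure[of A] measure_UNIV space_M by simp

lemma atom_le: "s < y \<Longrightarrow> measure M {s} \<le> G y - G s"
  using fm.finite_measure_mono[of "{s}" "{s..<y}"] measure_Ico[of s y] by (auto simp: sets_M)

lemma G_right: "(G \<longlongrightarrow> G s + measure M {s}) (at_right s)"
proof -
  let ?A = "\<lambda>n::nat. {s..<s + 1 / Suc n}"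
  have "(\<lambda>n. measure M (?A n)) \<longlonglongrightarrow> measure M (\<Inter>n. ?A n)"
  proof (intro Lim_measure_decseq)
    show "decseq ?A"
      unfolding decseq_def
    proof (intro allI impI subsetI)
      fix m n :: nat and x assume mn: "m \<le> n" and x: "x \<in> ?A n"
      have "1 / real (Suc n) \<le> 1 / real (Suc m)" using mn by (intro divide_left_mono) auto
      then show "x \<in> ?A m" using x by auto
    qed
    show "range ?A \<subseteq> sets M" by (simp add: sets_M image_subset_iff)
    show "emeasure M (?A i) \<noteq> \<infinity>" for i by (simp add: fm.emeasure_eq_measure)
  qed
  moreover have "(\<Inter>n. ?A n) = {s}"
  proof (rule set_eqI, rule iffI)
    fix x assume x: "x \<in> (\<Inter>n. ?A n)"
    have "x \<in> ?A 0" using INT_D[OF x, of 0] by simp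
    then have "s \<le> x" by simp
    have "x = s"
    proof (rule ccontr)
      assume "x \<noteq> s"
      then have "x - s > 0" using \<open>s \<le> x\<close> by auto
      then obtain n where n: "1 / Suc n < x - s" using nat_approx_posE by blast
      have "x \<in> ?A n" using INT_D[OF x, of n] by simp
      then have "x < s + 1 / Suc n" by simp
      with n show False by simp
    qed
    then show "x \<in> {s}" by simp
  next
    fix x assume "x \<in> {s}"
    then have "x = s" by simp
    then show "x \<in> (\<Inter>n. ?A n)" by simp
  qed
  moreover have "measure M (?A n) = G (s + 1 / Suc n) - G s" for n
    by (simp add: measure_Ico)
  ultimately have "(\<lambda>n. G (s + 1 / Suc n) - G s) \<longlonglongrightarrow> measure M {s}"
    by simp
  from tendsto_add[OF this tendsto_const[of "G s"]]
  have lim: "(\<lambda>n. G (s + 1 / Suc n)) \<longlonglongrightarrow> G s + measure M {s}"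
    by (simp add: add.commute)
  show ?thesis
  proof (rule order_tendstoI)
    fix y assume "y < G s + measure M {s}"
    moreover have "\<forall>\<^sub>F x in at_right s. G s + measure M {s} \<le> G x"
      unfolding eventually_at_right_field
    proof (intro exI[of _ "s + 1"] conjI allI impI)
      fix x assume "s < x" "x < s + 1"
      then have "measure M {s} \<le> G x - G s" using atom_le[of s x] by simp
      then show "G s + measure M {s} \<le> G x" by simp
    qed simp
    ultimately show "\<forall>\<^sub>F x in at_right s. y < G x"
      by (simp add: eventually_mono[where P="\<lambda>x. G s + measure M {s} \<le> G x"])
  next
    fix y assume "G s + measure M {s} < y"
    then have "\<forall>\<^sub>F n in sequentially. G (s + 1 / Suc n) < y"
      using lim order_tendstoD(2) by blast
    then obtain n where n: "G (s + 1 / Suc n) < y" by (auto simp: eventually_sequentially)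
    show "\<forall>\<^sub>F x in at_right s. G x < y"
      unfolding eventually_at_right_field
    proof (intro exI[of _ "s + 1 / Suc n"] conjI allI impI)
      fix x assume "s < x" "x < s + 1 / Suc n"
      then have "G x \<le> G (s + 1 / Suc n)" using G_le by simp
      then show "G x < y" using n by simp
    qed simp
  qed
qed

lemma g_right: "s \<in> {a..<b} \<Longrightarrow> (g \<longlongrightarrow> g s + measure M {s}) (at_right s)"
proof -
  assume s: "s \<in> {a..<b}"
  have "\<forall>\<^sub>F y in at_right s. G y = g y"
    unfolding eventually_at_right_field
    by (rule exI[of _ b]) (use s in \<open>auto simp: G_eq\<close>)
  then show ?thesis using G_right[of s] s by (simp add: G_eq tendsto_cong)
qed

lemma jump_eq: "s \<in> {a..<b} \<Longrightarrow> jump g s = measure M {s}"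
  unfolding jump_def using g_right[of s] by (simp add: tendsto_Lim)

lemma Dg_iff: "s \<in> Dg a b g \<longleftrightarrow> s \<in> {a..<b} \<and> measure M {s} > 0"
  unfolding Dg_def using jump_eq by auto

lemma big_atoms_finite:
  assumes "\<eta> > 0"
  shows "finite {s \<in> {a..<b}. \<eta> \<le> measure M {s}}" (is "finite ?E")
proof (rule ccontr)
  assume "infinite ?E"
  obtain n :: nat where n: "(g b - g a) / \<eta> < real n" using reals_Archimedean2 by blast
  obtain F where F: "finite F" "card F = n" "F \<subseteq> ?E"
    using infinite_arbitrarily_large[OF \<open>infinite ?E\<close>] by blast
  have "measure M F = (\<Sum>x\<in>F. measure M {x})"
    using F by (intro measure_eq_sum_singleton) (auto simp: sets_M)
  also have "\<dots> \<ge> (\<Sum>x\<in>F. \<eta>)" using F by (intro sum_mono) auto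
  finally have "real n * \<eta> \<le> g b - g a" using F measure_le_T[of F] by simp
  with n assms show False by (simp add: field_simps)
qed

end

definition Jop :: "real measure \<Rightarrow> real \<Rightarrow> (real \<Rightarrow> real) \<Rightarrow> real \<Rightarrow> real" where
  "Jop N c q x = (if c \<le> x then set_lebesgue_integral N {c..<x} q else - set_lebesgue_integral N {x..<c} q)"

definition bb :: "(real \<Rightarrow> real) \<Rightarrow> bool" where
  "bb q \<longleftrightarrow> q \<in> borel_measurable borel \<and> (\<exists>B. \<forall>x. \<bar>q x\<bar> \<le> B)"

context LS
begin

lemma gmono_Suc: "gmono a b g x0 (Suc n) x = real (Suc n) * Jop M x0 (gmono a b g x0 n) x"
  by (simp add: Jop_def)

lemma borel_M: "f \<in> borel_measurable borel \<Longrightarrow> f \<in> borel_measurable M"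
  using measurable_cong_sets[OF sets_M refl] by simp

lemma bb_integrable: "bb q \<Longrightarrow> integrable M q"
  unfolding bb_def
proof (elim conjE exE)
  fix B assume "q \<in> borel_measurable borel" "\<forall>x. \<bar>q x\<bar> \<le> B"
  then show "integrable M q"
    by (intro fm.integrable_const_bound[where B=B]) (auto simp: borel_M)
qed

lemma bb_set_integrable: "bb q \<Longrightarrow> A \<in> sets borel \<Longrightarrow> set_integrable M A q"
  unfolding set_integrable_def
  by (intro integrable_mult_indicator bb_integrable) (auto simp: sets_M)

abbreviation L where "L q u w \<equiv> set_lebesgue_integral M {u..<w} q"

lemma Iadd: "bb q \<Longrightarrow> u \<le> v \<Longrightarrow> v \<le> w \<Longrightarrow> L q u w = L q u v + L q v w"
proof -
  assume q: "bb q" and uv: "u \<le> v" "v \<le> w"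
  have "{u..<w} = {u..<v} \<union> {v..<w}" using uv by auto
  then show ?thesis
    by (simp only:) (rule set_integral_Un, auto intro!: bb_set_integrable q)
qed

lemma Jop_le: "c \<le> x \<Longrightarrow> Jop M c q x = L q c x"
  by (simp add: Jop_def)

lemma Jop_ge: "x \<le> c \<Longrightarrow> Jop M c q x = - L q x c"
  by (cases "x = c") (auto simp: Jop_def set_lebesgue_integral_def)

lemma chasles: "bb q \<Longrightarrow> Jop M c q x = Jop M c q y + Jop M y q x"
proof -
  assume q: "bb q"
  note H = Iadd[OF q]
  consider "c \<le> y" "y \<le> x" | "c \<le> x" "x \<le> y" | "y \<le> c" "c \<le> x" | "y \<le> x" "x \<le> c"
    | "x \<le> c" "c \<le> y" | "x \<le> y" "y \<le> c" by linarith
  then show ?thesis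
  proof cases
    case 1 then show ?thesis using H[of c y x] by (simp add: Jop_le)
  next
    case 2 then show ?thesis using H[of c x y] by (simp add: Jop_le Jop_ge)
  next
    case 3 then show ?thesis using H[of y c x] by (simp add: Jop_le Jop_ge)
  next
    case 4 then show ?thesis using H[of y x c] by (simp add: Jop_le Jop_ge)
  next
    case 5 then show ?thesis using H[of x c y] by (simp add: Jop_le Jop_ge)
  next
    case 6 then show ?thesis using H[of x y c] by (simp add: Jop_le Jop_ge)
  qed
qed


lemma bb_const[simp]: "bb (\<lambda>x. k)"
  unfolding bb_def by (auto intro: exI[of _ "\<bar>k\<bar>"])

lemma bb_add: "bb q1 \<Longrightarrow> bb q2 \<Longrightarrow> bb (\<lambda>x. q1 x + q2 x)"
  unfolding bb_def
proof (elim conjE exE, intro conjI)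
  fix B1 B2 assume "\<forall>x. \<bar>q1 x\<bar> \<le> B1" "\<forall>x. \<bar>q2 x\<bar> \<le> B2"
  then show "\<exists>B. \<forall>x. \<bar>q1 x + q2 x\<bar> \<le> B"
  proof (intro exI[of _ "B1 + B2"] allI)
    fix x have "\<bar>q1 x + q2 x\<bar> \<le> \<bar>q1 x\<bar> + \<bar>q2 x\<bar>" by (rule abs_triangle_ineq)
    then show "\<bar>q1 x + q2 x\<bar> \<le> B1 + B2" using \<open>\<forall>x. \<bar>q1 x\<bar> \<le> B1\<close> \<open>\<forall>x. \<bar>q2 x\<bar> \<le> B2\<close>
      by (smt (verit, best))
  qed
next
  assume "q1 \<in> borel_measurable borel" "q2 \<in> borel_measurable borel"
  then show "(\<lambda>x. q1 x + q2 x) \<in> borel_measurable borel" by measurable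
qed

lemma bb_mult: "bb q1 \<Longrightarrow> bb q2 \<Longrightarrow> bb (\<lambda>x. q1 x * q2 x)"
  unfolding bb_def
proof (elim conjE exE, intro conjI)
  fix B1 B2 assume h: "\<forall>x. \<bar>q1 x\<bar> \<le> B1" "\<forall>x. \<bar>q2 x\<bar> \<le> B2"
  show "\<exists>B. \<forall>x. \<bar>q1 x * q2 x\<bar> \<le> B"
  proof (intro exI[of _ "B1 * B2"] allI)
    fix x show "\<bar>q1 x * q2 x\<bar> \<le> B1 * B2"
      using h abs_mult mult_mono[of "\<bar>q1 x\<bar>" B1 "\<bar>q2 x\<bar>" B2] by (metis abs_ge_zero order_trans)
  qed
next
  assume "q1 \<in> borel_measurable borel" "q2 \<in> borel_measurable borel"
  then show "(\<lambda>x. q1 x * q2 x) \<in> borel_measurable borel" by measurable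
qed

lemma bb_cmult: "bb q \<Longrightarrow> bb (\<lambda>x. k * q x)"
  using bb_mult[of "\<lambda>x. k" q] by simp

lemma bb_minus: "bb q \<Longrightarrow> bb (\<lambda>x. - q x)"
  using bb_cmult[of q "-1"] by simp

lemma bb_diff: "bb q1 \<Longrightarrow> bb q2 \<Longrightarrow> bb (\<lambda>x. q1 x - q2 x)"
  using bb_add[of q1 "\<lambda>x. - q2 x"] bb_minus[of q2] by simp

lemma bb_sum: "finite S \<Longrightarrow> (\<And>i. i \<in> S \<Longrightarrow> bb (q i)) \<Longrightarrow> bb (\<lambda>x. \<Sum>i\<in>S. q i x)"
  by (induction S rule: finite_induct) (auto intro: bb_add)

lemma bb_power: "bb q \<Longrightarrow> bb (\<lambda>x. q x ^ n)"
  by (induction n) (auto intro: bb_mult)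

lemma bb_max0: "bb q \<Longrightarrow> bb (\<lambda>x. max (q x) 0)"
  unfolding bb_def
proof (elim conjE exE, intro conjI)
  fix B assume "\<forall>x. \<bar>q x\<bar> \<le> B"
  then show "\<exists>B. \<forall>x. \<bar>max (q x) 0\<bar> \<le> B"
    by (intro exI[of _ B]) (metis abs_le_D1 abs_of_nonneg max.bounded_iff max.cobounded2 dual_order.trans abs_ge_zero)
next
  assume "q \<in> borel_measurable borel"
  then show "(\<lambda>x. max (q x) 0) \<in> borel_measurable borel" by measurable
qed

lemma emeasure_lt_top[simp]: "emeasure M A < top"
  by (rule fm.emeasure_finite[THEN less_top[THEN iffD1]])

lemma L_bound:
  assumes q: "bb q" and B: "\<And>x. \<bar>q x\<bar> \<le> B"
  shows "\<bar>L q u w\<bar> \<le> B * measure M {u..<w}"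
proof -
  have i: "integrable M (\<lambda>x. indicator {u..<w} x * q x)"
    using bb_set_integrable[OF q, of "{u..<w}"] by (simp add: set_integrable_def)
  have "\<bar>L q u w\<bar> = \<bar>\<integral>x. indicator {u..<w} x * q x \<partial>M\<bar>"
    by (simp add: set_lebesgue_integral_def)
  also have "\<dots> \<le> \<integral>x. \<bar>indicator {u..<w} x * q x\<bar> \<partial>M"
    by (rule integral_abs_bound)
  also have "\<dots> \<le> \<integral>x. B * indicator {u..<w} x \<partial>M"
  proof (rule integral_mono)
    show "integrable M (\<lambda>x. \<bar>indicator {u..<w} x * q x\<bar>)" using i by auto
    show "integrable M (\<lambda>x. B * indicator {u..<w} x)"
      by (intro integrable_mult_right integrable_real_indicator) (auto simp: sets_M)
    show "\<bar>indicator {u..<w} x * q x\<bar> \<le> B * indicator {u..<w} x" for x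
      using B[of x] by (auto simp: indicator_def)
  qed
  also have "\<dots> = B * measure M {u..<w}" by (simp add: sets_M fm.emeasure_eq_measure)
  finally show ?thesis .
qed

lemma T_nonneg: "0 \<le> g b - g a" using g_mono[of a b] ab by auto

lemma Jop_bound:
  assumes q: "bb q" and B: "\<And>x. \<bar>q x\<bar> \<le> B"
  shows "\<bar>Jop M c q x\<bar> \<le> B * (g b - g a)"
proof -
  have B0: "0 \<le> B" using B[of 0] by linarith
  have "\<bar>L q u w\<bar> \<le> B * (g b - g a)" for u w
    using L_bound[OF q B, of u w] mult_left_mono[OF measure_le_T[of "{u..<w}"] B0] by linarith
  then show ?thesis by (simp add: Jop_def)
qed

lemma Jop_add: "bb q1 \<Longrightarrow> bb q2 \<Longrightarrow> Jop M c (\<lambda>y. q1 y + q2 y) x = Jop M c q1 x + Jop M c q2 x"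
  by (simp add: Jop_def set_integral_add(2) bb_set_integrable)

lemma Jop_diff: "bb q1 \<Longrightarrow> bb q2 \<Longrightarrow> Jop M c (\<lambda>y. q1 y - q2 y) x = Jop M c q1 x - Jop M c q2 x"
  by (simp add: Jop_def set_integral_diff(2) bb_set_integrable)

lemma Jop_cmult: "Jop M c (\<lambda>y. k * q y) x = k * Jop M c q x"
  by (simp add: Jop_def)

lemma Jop_sum: "finite S \<Longrightarrow> (\<And>i. i \<in> S \<Longrightarrow> bb (q i)) \<Longrightarrow>
    Jop M c (\<lambda>y. \<Sum>i\<in>S. q i y) x = (\<Sum>i\<in>S. Jop M c (q i) x)"
proof (induction S rule: finite_induct)
  case empty then show ?case by (simp add: Jop_def set_lebesgue_integral_def)
next
  case (insert i S)
  then show ?case by (simp add: Jop_add bb_sum)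
qed

lemma Jop_mono:
  assumes q: "bb q" and nn: "\<And>y. 0 \<le> q y"
  shows "mono (Jop M c q)"
proof (rule monoI)
  fix x x' :: real assume "x \<le> x'"
  have "Jop M c q x' = Jop M c q x + Jop M x q x'" by (rule chasles[OF q])
  moreover have "0 \<le> Jop M x q x'" using \<open>x \<le> x'\<close> nn
    by (simp add: Jop_le set_lebesgue_integral_def)
  ultimately show "Jop M c q x \<le> Jop M c q x'" by simp
qed

lemma Jop_borel:
  assumes q: "bb q"
  shows "Jop M c q \<in> borel_measurable borel"
proof -
  have p1: "bb (\<lambda>x. max (q x) 0)" by (rule bb_max0[OF q])
  have p2: "bb (\<lambda>x. max (- q x) 0)" by (rule bb_max0[OF bb_minus[OF q]])
  have eq: "Jop M c q x = Jop M c (\<lambda>x. max (q x) 0) x - Jop M c (\<lambda>x. max (- q x) 0) x" for x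
  proof -
    have "Jop M c q x = Jop M c (\<lambda>y. max (q y) 0 - max (- q y) 0) x"
      by (rule arg_cong[where f="\<lambda>h. Jop M c h x"]) auto
    then show ?thesis using Jop_diff[OF p1 p2] by simp
  qed
  have "mono (Jop M c (\<lambda>x. max (q x) 0))" by (rule Jop_mono[OF p1]) auto
  moreover have "mono (Jop M c (\<lambda>x. max (- q x) 0))" by (rule Jop_mono[OF p2]) auto
  ultimately have "(\<lambda>x. Jop M c (\<lambda>x. max (q x) 0) x - Jop M c (\<lambda>x. max (- q x) 0) x) \<in> borel_measurable borel"
    by (intro borel_measurable_diff borel_measurable_mono)
  moreover have "Jop M c q = (\<lambda>x. Jop M c (\<lambda>x. max (q x) 0) x - Jop M c (\<lambda>x. max (- q x) 0) x)"
    using eq by (rule ext)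
  ultimately show ?thesis by simp
qed

lemma bb_Jop: "bb q \<Longrightarrow> bb (Jop M c q)"
proof -
  assume q: "bb q"
  then obtain B where B: "\<And>x. \<bar>q x\<bar> \<le> B" unfolding bb_def by blast
  show ?thesis unfolding bb_def using Jop_borel[OF q] Jop_bound[OF q B] by blast
qed

lemma gmono_bb: "bb (gmono a b g x0 n)"
proof (induction n)
  case 0 then show ?case by simp
next
  case (Suc n)
  have "gmono a b g x0 (Suc n) = (\<lambda>x. real (Suc n) * Jop M x0 (gmono a b g x0 n) x)"
    by (rule ext) (rule gmono_Suc)
  then show ?case using bb_cmult[OF bb_Jop[OF Suc]] by simp
qed

end

lemma Pg_iff: "p \<in> Pg a b g \<longleftrightarrow> (\<exists>S c. finite S \<and> S \<subseteq> {a..b} \<times> UNIV \<and>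
   p = (\<lambda>x. \<Sum>i\<in>S. c i * of_real (gmono a b g (fst i) (snd i) x)))"
  unfolding Pg_def by (simp add: case_prod_beta')

lemma Pg_zero: "(\<lambda>x. 0) \<in> Pg a b g"
  unfolding Pg_iff by (rule exI[of _ "{}"]) auto

lemma Pg_mon: "x0 \<in> {a..b} \<Longrightarrow> (\<lambda>x. k * of_real (gmono a b g x0 n x)) \<in> Pg a b g"
  unfolding Pg_iff by (rule exI[of _ "{(x0, n)}"], rule exI[of _ "\<lambda>_. k"]) auto

lemma Pg_const: "a \<le> b \<Longrightarrow> (\<lambda>x. k) \<in> Pg a b g"
  using Pg_mon[of a a b k g 0] by simp

lemma Pg_add:
  fixes p1 p2 :: "real \<Rightarrow> 'f::real_normed_field"
  assumes "p1 \<in> Pg a b g" "p2 \<in> Pg a b g"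
  shows "(\<lambda>x. p1 x + p2 x) \<in> Pg a b g"
proof -
  obtain S1 c1 where 1: "finite S1" "S1 \<subseteq> {a..b} \<times> UNIV"
    "p1 = (\<lambda>x. \<Sum>i\<in>S1. c1 i * of_real (gmono a b g (fst i) (snd i) x))"
    using assms(1) unfolding Pg_iff by blast
  obtain S2 c2 where 2: "finite S2" "S2 \<subseteq> {a..b} \<times> UNIV"
    "p2 = (\<lambda>x. \<Sum>i\<in>S2. c2 i * of_real (gmono a b g (fst i) (snd i) x))"
    using assms(2) unfolding Pg_iff by blast
  define m where "m i x = (of_real (gmono a b g (fst i) (snd i) x) :: 'f)" for i x
  define c where "c i = (if i \<in> S1 then c1 i else 0) + (if i \<in> S2 then c2 i else 0)" for i
  have "(\<Sum>i\<in>S1 \<union> S2. c i * m i x) = (\<Sum>i\<in>S1. c1 i * m i x) + (\<Sum>i\<in>S2. c2 i * m i x)" for x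
  proof -
    have "c i * m i x = (if i \<in> S1 then c1 i * m i x else 0) + (if i \<in> S2 then c2 i * m i x else 0)" for i
      unfolding c_def by (simp add: distrib_right)
    then have "(\<Sum>i\<in>S1 \<union> S2. c i * m i x) = (\<Sum>i\<in>S1 \<union> S2. (if i \<in> S1 then c1 i * m i x else 0))
        + (\<Sum>i\<in>S1 \<union> S2. (if i \<in> S2 then c2 i * m i x else 0))"
      by (simp add: sum.distrib)
    also have "\<dots> = (\<Sum>i\<in>S1. c1 i * m i x) + (\<Sum>i\<in>S2. c2 i * m i x)"
    proof -
      have e1: "(\<Sum>i\<in>S1 \<union> S2. (if i \<in> S1 then c1 i * m i x else 0)) = (\<Sum>i\<in>(S1 \<union> S2) \<inter> S1. c1 i * m i x)"
        using sum.inter_restrict[of "S1 \<union> S2" "\<lambda>i. c1 i * m i x" S1] 1(1) 2(1) by simp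
      have e2: "(\<Sum>i\<in>S1 \<union> S2. (if i \<in> S2 then c2 i * m i x else 0)) = (\<Sum>i\<in>(S1 \<union> S2) \<inter> S2. c2 i * m i x)"
        using sum.inter_restrict[of "S1 \<union> S2" "\<lambda>i. c2 i * m i x" S2] 1(1) 2(1) by simp
      have "(S1 \<union> S2) \<inter> S1 = S1" "(S1 \<union> S2) \<inter> S2 = S2" by blast+
      then show ?thesis using e1 e2 by simp
    qed
    finally show ?thesis .
  qed
  then show ?thesis unfolding Pg_iff using 1 2
    by (intro exI[of _ "S1 \<union> S2"] exI[of _ c]) (auto simp: m_def)
qed

lemma Pg_cmult:
  assumes "p \<in> Pg a b g"
  shows "(\<lambda>x. k * p x) \<in> Pg a b g"
proof -
  obtain S c where 1: "finite S" "S \<subseteq> {a..b} \<times> UNIV"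
    "p = (\<lambda>x. \<Sum>i\<in>S. c i * of_real (gmono a b g (fst i) (snd i) x))"
    using assms(1) unfolding Pg_iff by blast
  then show ?thesis unfolding Pg_iff
    by (intro exI[of _ S] exI[of _ "\<lambda>i. k * c i"]) (auto simp: sum_distrib_left mult.assoc)
qed

lemma Pg_diff:
  assumes "p1 \<in> Pg a b g" "p2 \<in> Pg a b g"
  shows "(\<lambda>x. p1 x - p2 x) \<in> Pg a b g"
  using Pg_add[OF assms(1) Pg_cmult[OF assms(2), of "-1"]] by simp

lemma Pg_sum:
  "finite S \<Longrightarrow> (\<And>i. i \<in> S \<Longrightarrow> p i \<in> Pg a b g) \<Longrightarrow> (\<lambda>x. \<Sum>i\<in>S. p i x) \<in> Pg a b g"
proof (induction S rule: finite_induct)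
  case empty then show ?case using Pg_zero by simp
next
  case (insert i S) then show ?case using Pg_add[of "p i" a b g "\<lambda>x. \<Sum>i\<in>S. p i x"] by simp
qed

lemma Pg_of_real:
  assumes "p \<in> (Pg a b g :: (real \<Rightarrow> real) set)"
  shows "(\<lambda>x. of_real (p x) :: 'f::real_normed_field) \<in> Pg a b g"
proof -
  obtain S c where 1: "finite S" "S \<subseteq> {a..b} \<times> UNIV"
    "p = (\<lambda>x. \<Sum>i\<in>S. c i * of_real (gmono a b g (fst i) (snd i) x))"
    using assms(1) unfolding Pg_iff by blast
  then show ?thesis unfolding Pg_iff
    by (intro exI[of _ S] exI[of _ "\<lambda>i. of_real (c i) :: 'f"]) auto
qed

lemma Pg_Re:
  assumes "p \<in> (Pg a b g :: (real \<Rightarrow> complex) set)"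
  shows "(\<lambda>x. Re (p x)) \<in> (Pg a b g :: (real \<Rightarrow> real) set)"
proof -
  obtain S c where 1: "finite S" "S \<subseteq> {a..b} \<times> UNIV"
    "p = (\<lambda>x. \<Sum>i\<in>S. c i * of_real (gmono a b g (fst i) (snd i) x))"
    using assms(1) unfolding Pg_iff by blast
  then show ?thesis unfolding Pg_iff
    by (intro exI[of _ S] exI[of _ "\<lambda>i. Re (c i)"]) auto
qed

lemma Pg_Im:
  assumes "p \<in> (Pg a b g :: (real \<Rightarrow> complex) set)"
  shows "(\<lambda>x. Im (p x)) \<in> (Pg a b g :: (real \<Rightarrow> real) set)"
proof -
  obtain S c where 1: "finite S" "S \<subseteq> {a..b} \<times> UNIV"
    "p = (\<lambda>x. \<Sum>i\<in>S. c i * of_real (gmono a b g (fst i) (snd i) x))"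
    using assms(1) unfolding Pg_iff by blast
  then show ?thesis unfolding Pg_iff
    by (intro exI[of _ S] exI[of _ "\<lambda>i. Im (c i)"]) auto
qed

context LS
begin

lemma Pg_bb: "p \<in> (Pg a b g :: (real \<Rightarrow> real) set) \<Longrightarrow> bb p"
  unfolding Pg_iff
  by (auto intro!: bb_sum bb_cmult gmono_bb)

lemma Pg_Jop:
  assumes "p \<in> (Pg a b g :: (real \<Rightarrow> real) set)"
  shows "\<exists>P' \<in> (Pg a b g :: (real \<Rightarrow> real) set). \<forall>x. Jop M a p x = P' x"
proof -
  obtain S c where 1: "finite S" "S \<subseteq> {a..b} \<times> UNIV"
    "p = (\<lambda>x. \<Sum>i\<in>S. c i * gmono a b g (fst i) (snd i) x)"
    using assms(1) unfolding Pg_iff by auto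
  define m where "m i = gmono a b g (fst i) (Suc (snd i))" for i
  define d where "d i = c i / real (Suc (snd i))" for i
  define K where "K = (\<Sum>i\<in>S. d i * m i a)"
  have J1: "Jop M a (gmono a b g x0 n) x = (gmono a b g x0 (Suc n) x - gmono a b g x0 (Suc n) a) / real (Suc n)" for x0 n x
  proof -
    have "Jop M x0 (gmono a b g x0 n) x = Jop M x0 (gmono a b g x0 n) a + Jop M a (gmono a b g x0 n) x"
      by (rule chasles[OF gmono_bb])
    moreover have "gmono a b g x0 (Suc n) x - gmono a b g x0 (Suc n) a =
        real (Suc n) * (Jop M x0 (gmono a b g x0 n) x - Jop M x0 (gmono a b g x0 n) a)"
      by (simp only: gmono_Suc right_diff_distrib)
    ultimately have "gmono a b g x0 (Suc n) x - gmono a b g x0 (Suc n) a =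
        real (Suc n) * Jop M a (gmono a b g x0 n) x" by simp
    then show ?thesis by (simp del: gmono.simps)
  qed
  have "Jop M a p x = (\<Sum>i\<in>S. d i * m i x) - K" for x
  proof -
    have "Jop M a p x = (\<Sum>i\<in>S. Jop M a (\<lambda>y. c i * gmono a b g (fst i) (snd i) y) x)"
      unfolding 1(3) by (rule Jop_sum[OF 1(1)]) (auto intro!: bb_cmult gmono_bb)
    also have "\<dots> = (\<Sum>i\<in>S. d i * m i x - d i * m i a)"
      by (intro sum.cong refl) (simp del: gmono.simps add: Jop_cmult J1 d_def m_def diff_divide_distrib right_diff_distrib)
    finally show ?thesis by (simp add: K_def sum_subtractf)
  qed
  moreover have "(\<lambda>x. (\<Sum>i\<in>S. d i * m i x) - K) \<in> Pg a b g"
  proof (rule Pg_diff)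
    show "(\<lambda>x. \<Sum>i\<in>S. d i * m i x) \<in> Pg a b g"
    proof (rule Pg_sum[OF 1(1)])
      fix i assume "i \<in> S"
      then have "fst i \<in> {a..b}" using 1(2) by auto
      from Pg_mon[OF this, of "d i" g "Suc (snd i)"]
      show "(\<lambda>x. d i * m i x) \<in> Pg a b g" unfolding m_def by (simp del: gmono.simps)
    qed
    show "(\<lambda>x. K) \<in> Pg a b g" using ab by (rule Pg_const)
  qed
  ultimately show ?thesis by auto
qed

end

context LS
begin

definition R2 :: "(real \<Rightarrow> real) \<Rightarrow> real" where
  "R2 h = (\<integral>x. (h x)\<^sup>2 * indicator {a..<b} x \<partial>M)"

abbreviation T where "T \<equiv> g b - g a"

definition inV :: "(real \<Rightarrow> real) \<Rightarrow> bool" where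
  "inV h \<longleftrightarrow> in_L2_closure_Pg a b g h"

definition inS :: "(real \<Rightarrow> real) \<Rightarrow> bool" where
  "inS h \<longleftrightarrow> (\<forall>\<epsilon>>0. \<exists>p\<in>Pg a b g. \<forall>x\<in>{a..b}. \<bar>h x - p x\<bar> < \<epsilon>)"

lemma bb_ind: "A \<in> sets borel \<Longrightarrow> bb (indicator A)"
  unfolding bb_def by (auto intro!: exI[of _ 1] borel_measurable_indicator simp: indicator_def)

lemma bb_sq_ind: "bb h \<Longrightarrow> bb (\<lambda>x. (h x)\<^sup>2 * indicator {a..<b} x)"
  unfolding power2_eq_square by (intro bb_mult bb_ind) auto

lemma R2_nonneg: "0 \<le> R2 h"
  unfolding R2_def by (rule Bochner_Integration.integral_nonneg) (simp add: indicator_def)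

lemma L2d_eq:
  assumes "bb h"
  shows "(\<integral>\<^sup>+ x. ennreal ((norm (h x))\<^sup>2 * indicator {a..<b} x) \<partial>M) = ennreal (R2 h)"
proof -
  have "(\<integral>\<^sup>+ x. ennreal ((norm (h x))\<^sup>2 * indicator {a..<b} x) \<partial>M)
      = (\<integral>\<^sup>+ x. ennreal ((h x)\<^sup>2 * indicator {a..<b} x) \<partial>M)" by simp
  also have "\<dots> = ennreal (R2 h)"
    unfolding R2_def
    by (rule nn_integral_eq_integral[OF bb_integrable[OF bb_sq_ind[OF assms]]]) (simp add: indicator_def)
  finally show ?thesis .
qed

lemma inV_iff:
  assumes "bb h"
  shows "inV h \<longleftrightarrow> (\<forall>\<epsilon>>0. \<exists>p\<in>Pg a b g. R2 (\<lambda>x. h x - p x) < \<epsilon>)"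
proof -
  have "(\<integral>\<^sup>+ x. ennreal ((norm (h x - p x))\<^sup>2 * indicator {a..<b} x) \<partial>M) < ennreal \<epsilon>
       \<longleftrightarrow> R2 (\<lambda>x. h x - p x) < \<epsilon>" if "p \<in> Pg a b g" "\<epsilon> > 0" for p \<epsilon>
  proof -
    have "bb (\<lambda>x. h x - p x)" using assms Pg_bb[OF that(1)] by (rule bb_diff)
    from L2d_eq[OF this] show ?thesis
      using R2_nonneg ennreal_less_iff by simp
  qed
  then show ?thesis unfolding inV_def in_L2_closure_Pg_def by auto
qed

lemma R2_mono_bound:
  assumes "bb u" "bb v" "\<And>x. x \<in> {a..<b} \<Longrightarrow> (u x)\<^sup>2 \<le> v x"
  shows "R2 u \<le> (\<integral>x. v x * indicator {a..<b} x \<partial>M)"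
  unfolding R2_def
proof (rule integral_mono)
  show "integrable M (\<lambda>x. (u x)\<^sup>2 * indicator {a..<b} x)" by (intro bb_integrable bb_sq_ind assms)
  show "integrable M (\<lambda>x. v x * indicator {a..<b} x)" by (intro bb_integrable bb_mult bb_ind assms) auto
  show "(u x)\<^sup>2 * indicator {a..<b} x \<le> v x * indicator {a..<b} x" for x
    using assms(3)[of x] by (auto simp: indicator_def)
qed

lemma R2_tri:
  assumes u: "bb u" and v: "bb v"
  shows "R2 (\<lambda>x. u x + v x) \<le> 2 * R2 u + 2 * R2 v"
proof -
  have "R2 (\<lambda>x. u x + v x) \<le> (\<integral>x. (2 * (u x)\<^sup>2 + 2 * (v x)\<^sup>2) * indicator {a..<b} x \<partial>M)"
  proof (rule R2_mono_bound)
    show "bb (\<lambda>x. u x + v x)" using u v by (rule bb_add)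
    show "bb (\<lambda>x. 2 * (u x)\<^sup>2 + 2 * (v x)\<^sup>2)"
      using u v by (intro bb_add bb_cmult bb_power)
    show "(u x + v x)\<^sup>2 \<le> 2 * (u x)\<^sup>2 + 2 * (v x)\<^sup>2" for x
      using sum_squares_ge_zero[of "u x - v x" 0] by (simp add: power2_eq_square algebra_simps)
  qed
  also have "\<dots> = 2 * R2 u + 2 * R2 v"
  proof -
    have iu: "integrable M (\<lambda>x. (u x)\<^sup>2 * indicator {a..<b} x)" by (intro bb_integrable bb_sq_ind u)
    have iv: "integrable M (\<lambda>x. (v x)\<^sup>2 * indicator {a..<b} x)" by (intro bb_integrable bb_sq_ind v)
    have "(\<integral>x. (2 * (u x)\<^sup>2 + 2 * (v x)\<^sup>2) * indicator {a..<b} x \<partial>M)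
        = (\<integral>x. 2 * ((u x)\<^sup>2 * indicator {a..<b} x) + 2 * ((v x)\<^sup>2 * indicator {a..<b} x) \<partial>M)"
      by (simp add: algebra_simps)
    also have "\<dots> = 2 * R2 u + 2 * R2 v"
      unfolding R2_def using iu iv by simp
    finally show ?thesis .
  qed
  finally show ?thesis .
qed

lemma R2_cmult: "R2 (\<lambda>x. k * u x) = k\<^sup>2 * R2 u"
  unfolding R2_def by (simp add: power_mult_distrib mult.assoc)

lemma R2_unif:
  assumes u: "bb u" and d: "\<And>x. x \<in> {a..<b} \<Longrightarrow> \<bar>u x\<bar> \<le> \<delta>"
  shows "R2 u \<le> \<delta>\<^sup>2 * T"
proof -
  have "R2 u \<le> (\<integral>x. \<delta>\<^sup>2 * indicator {a..<b} x \<partial>M)"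
  proof (rule R2_mono_bound[OF u])
    show "bb (\<lambda>x. \<delta>\<^sup>2)" by simp
    show "(u x)\<^sup>2 \<le> \<delta>\<^sup>2" if "x \<in> {a..<b}" for x
      using d[OF that] by (metis abs_ge_zero abs_le_square_iff power2_abs order_trans abs_le_D1 power_mono)
  qed
  also have "\<dots> = \<delta>\<^sup>2 * measure M {a..<b}" by (simp add: sets_M)
  also have "measure M {a..<b} = T" using ab by (simp add: measure_Ico G_eq)
  finally show ?thesis .
qed


lemma V_Pg: "p \<in> Pg a b g \<Longrightarrow> inV p"
  using Pg_bb[of p] by (subst inV_iff) (auto intro!: bexI[of _ p] simp: R2_def)

lemma V_add:
  assumes h1: "bb h1" "inV h1" and h2: "bb h2" "inV h2"
  shows "inV (\<lambda>x. h1 x + h2 x)"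
proof (subst inV_iff, intro bb_add h1 h2, intro allI impI)
  fix \<epsilon> :: real assume e: "\<epsilon> > 0"
  obtain p1 where p1: "p1 \<in> Pg a b g" "R2 (\<lambda>x. h1 x - p1 x) < \<epsilon> / 4"
    using h1 e unfolding inV_iff[OF h1(1)] by (meson divide_pos_pos zero_less_numeral)
  obtain p2 where p2: "p2 \<in> Pg a b g" "R2 (\<lambda>x. h2 x - p2 x) < \<epsilon> / 4"
    using h2 e unfolding inV_iff[OF h2(1)] by (meson divide_pos_pos zero_less_numeral)
  have "R2 (\<lambda>x. h1 x + h2 x - (p1 x + p2 x)) = R2 (\<lambda>x. (h1 x - p1 x) + (h2 x - p2 x))"
    by (simp add: algebra_simps)
  also have "\<dots> \<le> 2 * R2 (\<lambda>x. h1 x - p1 x) + 2 * R2 (\<lambda>x. h2 x - p2 x)"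
    by (intro R2_tri bb_diff h1 h2 Pg_bb p1 p2)
  also have "\<dots> < \<epsilon>" using p1 p2 by simp
  finally have "R2 (\<lambda>x. h1 x + h2 x - (p1 x + p2 x)) < \<epsilon>" .
  then show "\<exists>p\<in>Pg a b g. R2 (\<lambda>x. h1 x + h2 x - p x) < \<epsilon>"
    by (intro bexI[where x="\<lambda>x. p1 x + p2 x"] Pg_add[OF p1(1) p2(1)])
qed

lemma V_cmult:
  assumes h: "bb h" "inV h"
  shows "inV (\<lambda>x. k * h x)"
proof (cases "k = 0")
  case True then show ?thesis using V_Pg[OF Pg_zero] by simp
next
  case False
  show ?thesis
  proof (subst inV_iff, intro bb_cmult h, intro allI impI)
    fix \<epsilon> :: real assume e: "\<epsilon> > 0"
    have k2: "k\<^sup>2 > 0" using False by simp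
    obtain p where p: "p \<in> Pg a b g" "R2 (\<lambda>x. h x - p x) < \<epsilon> / k\<^sup>2"
      using h e k2 unfolding inV_iff[OF h(1)] by (meson divide_pos_pos)
    have "R2 (\<lambda>x. k * h x - k * p x) = k\<^sup>2 * R2 (\<lambda>x. h x - p x)"
      using R2_cmult[of k "\<lambda>x. h x - p x"] by (simp add: algebra_simps)
    also have "\<dots> < \<epsilon>" using p k2 by (simp add: field_simps)
    finally have "R2 (\<lambda>x. k * h x - k * p x) < \<epsilon>" .
    then show "\<exists>p\<in>Pg a b g. R2 (\<lambda>x. k * h x - p x) < \<epsilon>"
      by (intro bexI[where x="\<lambda>x. k * p x"] Pg_cmult[OF p(1)])
  qed
qed

lemma V_sum:
  "finite S \<Longrightarrow> (\<And>i. i \<in> S \<Longrightarrow> bb (h i) \<and> inV (h i)) \<Longrightarrow> inV (\<lambda>x. \<Sum>i\<in>S. h i x)"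
proof (induction S rule: finite_induct)
  case empty then show ?case using V_Pg[OF Pg_zero] by simp
next
  case (insert i S)
  then show ?case by (simp, intro V_add bb_sum) auto
qed

lemma V_lim:
  assumes h: "bb h" and app: "\<And>\<epsilon>. \<epsilon> > 0 \<Longrightarrow> \<exists>v. bb v \<and> inV v \<and> R2 (\<lambda>x. h x - v x) < \<epsilon>"
  shows "inV h"
proof (subst inV_iff[OF h], intro allI impI)
  fix \<epsilon> :: real assume e: "\<epsilon> > 0"
  obtain v where v: "bb v" "inV v" "R2 (\<lambda>x. h x - v x) < \<epsilon> / 4"
    using app[of "\<epsilon> / 4"] e by auto
  obtain p where p: "p \<in> Pg a b g" "R2 (\<lambda>x. v x - p x) < \<epsilon> / 4"
    using v e unfolding inV_iff[OF v(1)] by (meson divide_pos_pos zero_less_numeral)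
  have "R2 (\<lambda>x. h x - p x) = R2 (\<lambda>x. (h x - v x) + (v x - p x))" by simp
  also have "\<dots> \<le> 2 * R2 (\<lambda>x. h x - v x) + 2 * R2 (\<lambda>x. v x - p x)"
    by (intro R2_tri bb_diff h v Pg_bb p)
  also have "\<dots> < \<epsilon>" using p v by simp
  finally show "\<exists>p\<in>Pg a b g. R2 (\<lambda>x. h x - p x) < \<epsilon>" using p by blast
qed

lemma small_delta:
  assumes "\<epsilon> > 0"
  shows "\<exists>\<delta>>0. \<delta>\<^sup>2 * T < \<epsilon>"
proof -
  define \<delta> where "\<delta> = min 1 (\<epsilon> / (T + 1))"
  have T0: "0 \<le> T" by (rule T_nonneg)
  have d0: "\<delta> > 0" using assms T0 by (simp add: \<delta>_def)
  have "\<delta> \<le> 1" by (simp add: \<delta>_def)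
  then have "\<delta>\<^sup>2 \<le> \<delta>" using d0 mult_left_le_one_le[of \<delta> \<delta>] by (simp add: power2_eq_square)
  also have "\<dots> \<le> \<epsilon> / (T + 1)" by (simp add: \<delta>_def)
  finally have "\<delta>\<^sup>2 * T \<le> \<epsilon> / (T + 1) * T" using T0 by (rule mult_right_mono)
  also have "\<dots> < \<epsilon>" using assms T0 by (simp add: field_simps)
  finally show ?thesis using d0 by blast
qed

lemma S_V:
  assumes h: "bb h" "inS h"
  shows "inV h"
proof (subst inV_iff[OF h(1)], intro allI impI)
  fix \<epsilon> :: real assume e: "\<epsilon> > 0"
  obtain \<delta> where d: "\<delta> > 0" "\<delta>\<^sup>2 * T < \<epsilon>" using small_delta[OF e] by blast
  obtain p where p: "p \<in> Pg a b g" "\<forall>x\<in>{a..b}. \<bar>h x - p x\<bar> < \<delta>"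
    using h(2) d unfolding inS_def by blast
  have "R2 (\<lambda>x. h x - p x) \<le> \<delta>\<^sup>2 * T"
  proof (rule R2_unif[OF bb_diff[OF h(1) Pg_bb[OF p(1)]]])
    fix x assume "x \<in> {a..<b}"
    then have "x \<in> {a..b}" by simp
    then show "\<bar>h x - p x\<bar> \<le> \<delta>" using p(2) by (simp add: less_imp_le)
  qed
  then show "\<exists>p\<in>Pg a b g. R2 (\<lambda>x. h x - p x) < \<epsilon>" using p d by force
qed

lemma S_Pg: "p \<in> Pg a b g \<Longrightarrow> inS p"
  unfolding inS_def by force

lemma S_cong: "inS h \<Longrightarrow> (\<And>x. x \<in> {a..b} \<Longrightarrow> h x = h' x) \<Longrightarrow> inS h'"
  unfolding inS_def by metis

lemma S_add:
  assumes "inS h1" "inS h2"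
  shows "inS (\<lambda>x. h1 x + h2 x)"
  unfolding inS_def
proof (intro allI impI)
  fix \<epsilon> :: real assume e: "\<epsilon> > 0"
  obtain p1 where p1: "p1 \<in> Pg a b g" "\<forall>x\<in>{a..b}. \<bar>h1 x - p1 x\<bar> < \<epsilon> / 2"
    using assms(1) e unfolding inS_def by (meson half_gt_zero)
  obtain p2 where p2: "p2 \<in> Pg a b g" "\<forall>x\<in>{a..b}. \<bar>h2 x - p2 x\<bar> < \<epsilon> / 2"
    using assms(2) e unfolding inS_def by (meson half_gt_zero)
  have "\<forall>x\<in>{a..b}. \<bar>h1 x + h2 x - (p1 x + p2 x)\<bar> < \<epsilon>"
  proof
    fix x assume "x \<in> {a..b}"
    then have "\<bar>h1 x - p1 x\<bar> < \<epsilon> / 2" "\<bar>h2 x - p2 x\<bar> < \<epsilon> / 2" using p1 p2 by auto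
    then show "\<bar>h1 x + h2 x - (p1 x + p2 x)\<bar> < \<epsilon>" by linarith
  qed
  then show "\<exists>p\<in>Pg a b g. \<forall>x\<in>{a..b}. \<bar>h1 x + h2 x - p x\<bar> < \<epsilon>"
    by (intro bexI[where x="\<lambda>x. p1 x + p2 x"] Pg_add[OF p1(1) p2(1)])
qed

lemma S_cmult:
  assumes "inS h"
  shows "inS (\<lambda>x. k * h x)"
  unfolding inS_def
proof (intro allI impI)
  fix \<epsilon> :: real assume e: "\<epsilon> > 0"
  obtain p where p: "p \<in> Pg a b g" "\<forall>x\<in>{a..b}. \<bar>h x - p x\<bar> < \<epsilon> / (\<bar>k\<bar> + 1)"
    using assms e unfolding inS_def by (meson divide_pos_pos abs_ge_zero add_nonneg_pos zero_less_one)
  have "\<forall>x\<in>{a..b}. \<bar>k * h x - k * p x\<bar> < \<epsilon>"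
  proof
    fix x assume "x \<in> {a..b}"
    then have h: "\<bar>h x - p x\<bar> < \<epsilon> / (\<bar>k\<bar> + 1)" using p by auto
    have "\<bar>k * h x - k * p x\<bar> = \<bar>k\<bar> * \<bar>h x - p x\<bar>" by (simp add: abs_mult[symmetric] algebra_simps)
    also have "\<dots> \<le> (\<bar>k\<bar> + 1) * \<bar>h x - p x\<bar>" by (simp add: mult_right_mono)
    also have "\<dots> < \<epsilon>" using h by (simp add: field_simps add_pos_nonneg)
    finally show "\<bar>k * h x - k * p x\<bar> < \<epsilon>" .
  qed
  then show "\<exists>p\<in>Pg a b g. \<forall>x\<in>{a..b}. \<bar>k * h x - p x\<bar> < \<epsilon>"
    by (intro bexI[where x="\<lambda>x. k * p x"] Pg_cmult[OF p(1)])
qed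

lemma S_sum: "finite S \<Longrightarrow> (\<And>i. i \<in> S \<Longrightarrow> inS (h i)) \<Longrightarrow> inS (\<lambda>x. \<Sum>i\<in>S. h i x)"
proof (induction S rule: finite_induct)
  case empty then show ?case using S_Pg[OF Pg_zero] by simp
next
  case (insert i S) then show ?case by (simp, intro S_add) auto
qed


lemma Jop_L1:
  assumes u: "bb u" and lam: "lam > 0" and x: "x \<in> {a..b}"
  shows "\<bar>Jop M a u x\<bar> \<le> R2 u / (2 * lam) + lam * T / 2"
proof -
  have i1: "integrable M (\<lambda>y. indicator {a..<x} y * u y)"
    using bb_set_integrable[OF u, of "{a..<x}"] by (simp add: set_integrable_def)
  have i2: "integrable M (\<lambda>y. (u y)\<^sup>2 * indicator {a..<b} y)" by (intro bb_integrable bb_sq_ind u)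
  have i3: "integrable M (\<lambda>y. indicator {a..<b} y :: real)"
    by (intro integrable_real_indicator) (auto simp: sets_M)
  have "\<bar>Jop M a u x\<bar> = \<bar>\<integral>y. indicator {a..<x} y * u y \<partial>M\<bar>"
    using x by (simp add: Jop_le set_lebesgue_integral_def)
  also have "\<dots> \<le> \<integral>y. \<bar>indicator {a..<x} y * u y\<bar> \<partial>M" by (rule integral_abs_bound)
  also have "\<dots> \<le> \<integral>y. (1 / (2 * lam)) * ((u y)\<^sup>2 * indicator {a..<b} y) + (lam / 2) * indicator {a..<b} y \<partial>M"
  proof (rule integral_mono)
    show "integrable M (\<lambda>y. \<bar>indicator {a..<x} y * u y\<bar>)" using i1 by auto
    show "integrable M (\<lambda>y. (1 / (2 * lam)) * ((u y)\<^sup>2 * indicator {a..<b} y) + (lam / 2) * indicator {a..<b} y)"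
      using i2 i3 by auto
    fix y
    have key: "\<bar>u y\<bar> \<le> (1 / (2 * lam)) * (u y)\<^sup>2 + lam / 2"
    proof -
      have "0 \<le> (\<bar>u y\<bar> - lam)\<^sup>2" by simp
      then have "2 * lam * \<bar>u y\<bar> \<le> (u y)\<^sup>2 + lam\<^sup>2" by (simp add: power2_eq_square algebra_simps)
      then show ?thesis using lam by (simp add: field_simps power2_eq_square)
    qed
    show "\<bar>indicator {a..<x} y * u y\<bar> \<le> (1 / (2 * lam)) * ((u y)\<^sup>2 * indicator {a..<b} y) + (lam / 2) * indicator {a..<b} y"
      using key x lam by (auto simp: indicator_def)
  qed
  also have "\<dots> = (1 / (2 * lam)) * R2 u + (lam / 2) * measure M {a..<b}"
    using i2 i3 by (simp add: R2_def sets_M)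
  also have "measure M {a..<b} = T" using ab by (simp add: measure_Ico G_eq)
  finally show ?thesis by simp
qed

lemma J_S:
  assumes h: "bb h" "inV h"
  shows "inS (Jop M a h)"
  unfolding inS_def
proof (intro allI impI)
  fix \<epsilon> :: real assume e: "\<epsilon> > 0"
  have T0: "0 \<le> T" by (rule T_nonneg)
  define lam where "lam = \<epsilon> / (T + 1)"
  have lam: "lam > 0" using e T0 by (simp add: lam_def)
  obtain p where p: "p \<in> Pg a b g" "R2 (\<lambda>x. h x - p x) < lam * \<epsilon>"
    using h lam e unfolding inV_iff[OF h(1)] by (meson mult_pos_pos)
  obtain P' where P': "P' \<in> Pg a b g" "\<And>x. Jop M a p x = P' x" using Pg_Jop[OF p(1)] by blast
  have "\<forall>x\<in>{a..b}. \<bar>Jop M a h x - P' x\<bar> < \<epsilon>"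
  proof
    fix x assume x: "x \<in> {a..b}"
    have "Jop M a h x - P' x = Jop M a (\<lambda>y. h y - p y) x"
      using Jop_diff[OF h(1) Pg_bb[OF p(1)]] P'(2) by simp
    also have "\<bar>\<dots>\<bar> \<le> R2 (\<lambda>y. h y - p y) / (2 * lam) + lam * T / 2"
      by (rule Jop_L1[OF bb_diff[OF h(1) Pg_bb[OF p(1)]] lam x])
    also have "\<dots> < \<epsilon> / 2 + \<epsilon> / 2"
    proof (rule add_strict_mono)
      show "R2 (\<lambda>y. h y - p y) / (2 * lam) < \<epsilon> / 2" using p(2) lam by (simp add: field_simps)
      show "lam * T / 2 < \<epsilon> / 2" using e T0 by (simp add: lam_def field_simps)
    qed
    finally show "\<bar>Jop M a h x - P' x\<bar> < \<epsilon>" by simp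
  qed
  then show "\<exists>p\<in>Pg a b g. \<forall>x\<in>{a..b}. \<bar>Jop M a h x - p x\<bar> < \<epsilon>" using P'(1) by blast
qed

end

context LS
begin

definition K :: "real \<Rightarrow> real" where "K y = measure M {a..y}"

lemma K_mono: "mono K"
  unfolding K_def mono_def
  by (intro allI impI fm.finite_measure_mono) (auto simp: sets_M)

lemma bb_K: "bb K"
  unfolding bb_def
proof (intro conjI)
  show "K \<in> borel_measurable borel" by (rule borel_measurable_mono[OF K_mono])
  show "\<exists>B. \<forall>x. \<bar>K x\<bar> \<le> B" unfolding K_def using measure_le_T by (intro exI[of _ T]) auto
qed

lemma K_below: "y < a \<Longrightarrow> K y = 0"
  unfolding K_def by simp

interpretation pf: pair_sigma_finite M M
  by (intro pair_sigma_finite.intro fm.sigma_finite_measure_axioms)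

lemma prod_rule:
  assumes v: "bb v" and x: "a \<le> x"
  shows "measure M {a..<x} * Jop M a v x = Jop M a (\<lambda>y. Jop M a v y + v y * K y) x"
proof -
  define A where "A = {a..<x}"
  define Jv where "Jv = Jop M a v"
  define F where "F s y = (if a \<le> s \<and> s \<le> y \<and> y < x then v y else 0)" for s y
  have vM[measurable]: "v \<in> borel_measurable M" using v by (simp add: bb_def borel_M)
  obtain B where B: "\<And>y. \<bar>v y\<bar> \<le> B" using v unfolding bb_def by blast
  have bbJ: "bb Jv" unfolding Jv_def by (rule bb_Jop[OF v])
  have JvM[measurable]: "Jv \<in> borel_measurable M" using bbJ by (simp add: bb_def borel_M)
  have KM[measurable]: "K \<in> borel_measurable M" using bb_K by (simp add: bb_def borel_M)
  have FM: "(\<lambda>(s, y). F s y) \<in> borel_measurable (M \<Otimes>\<^sub>M M)"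
    unfolding F_def by measurable
  have Fint: "integrable (M \<Otimes>\<^sub>M M) (\<lambda>(s, y). F s y)"
  proof -
    interpret pfm: finite_measure "M \<Otimes>\<^sub>M M"
      by (rule finite_measure_pair_measure[OF finM finM])
    have B0: "0 \<le> B" using B[of 0] by linarith
    have "AE p in M \<Otimes>\<^sub>M M. norm ((\<lambda>(s, y). F s y) p) \<le> B"
    proof (rule AE_I2)
      fix p :: "real \<times> real"
      obtain s y where "p = (s, y)" by fastforce
      then show "norm ((\<lambda>(s, y). F s y) p) \<le> B" using B[of y] B0 by (simp add: F_def)
    qed
    then show ?thesis
      by (rule pfm.integrable_const_bound[where B=B]) (rule FM)
  qed
  have fub: "(\<integral>y. (\<integral>s. F s y \<partial>M) \<partial>M) = (\<integral>s. (\<integral>y. F s y \<partial>M) \<partial>M)"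
    using pf.Fubini_integral[OF Fint] .
  have in1: "(\<integral>s. F s y \<partial>M) = indicator A y * (v y * K y)" for y
  proof -
    have "(\<integral>s. F s y \<partial>M) = (\<integral>s. indicator {a..y} s * (indicator A y * v y) \<partial>M)"
      by (intro Bochner_Integration.integral_cong) (auto simp: F_def A_def indicator_def)
    also have "\<dots> = measure M {a..y} * (indicator A y * v y)"
      by (simp add: sets_M)
    also have "\<dots> = indicator A y * (v y * K y)"
      by (auto simp: K_def A_def indicator_def)
    finally show ?thesis .
  qed
  have in2: "(\<integral>y. F s y \<partial>M) = indicator A s * (Jv x - Jv s)" for s
  proof (cases "s \<in> A")
    case True
    then have "(\<integral>y. F s y \<partial>M) = (\<integral>y. indicator {s..<x} y * v y \<partial>M)"
      by (intro Bochner_Integration.integral_cong) (auto simp: F_def A_def indicator_def)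
    also have "\<dots> = Jop M s v x"
      using True by (simp add: Jop_le A_def set_lebesgue_integral_def)
    also have "\<dots> = Jv x - Jv s"
      unfolding Jv_def using chasles[OF v, of a x s] by simp
    finally show ?thesis using True by simp
  next
    case False
    then have "(\<integral>y. F s y \<partial>M) = (\<integral>y. 0 \<partial>M)"
      by (intro Bochner_Integration.integral_cong) (auto simp: F_def A_def)
    then show ?thesis using False by simp
  qed
  have iA: "integrable M (\<lambda>s. indicator A s :: real)"
    by (intro integrable_real_indicator) (auto simp: sets_M A_def)
  have i1: "integrable M (\<lambda>s. indicator A s * Jv s)"
    using bb_set_integrable[OF bbJ, of A] by (simp add: set_integrable_def A_def)
  have i2: "integrable M (\<lambda>s. indicator A s * (Jv x - Jv s))"
    using bb_set_integrable[OF bb_diff[OF bb_const bbJ], of A] by (simp add: set_integrable_def A_def)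
  have i3: "integrable M (\<lambda>y. indicator A y * (v y * K y))"
    using bb_set_integrable[OF bb_mult[OF v bb_K], of A] by (simp add: set_integrable_def A_def)
  have "measure M {a..<x} * Jv x = (\<integral>s. indicator A s * Jv x \<partial>M)"
    by (simp add: A_def sets_M)
  also have "\<dots> = (\<integral>s. indicator A s * Jv s + indicator A s * (Jv x - Jv s) \<partial>M)"
    by (simp add: algebra_simps)
  also have "\<dots> = (\<integral>s. indicator A s * Jv s \<partial>M) + (\<integral>s. indicator A s * (Jv x - Jv s) \<partial>M)"
    using i1 i2 by simp
  also have "(\<integral>s. indicator A s * (Jv x - Jv s) \<partial>M) = (\<integral>y. indicator A y * (v y * K y) \<partial>M)"
    using fub in1 in2 by simp
  also have "(\<integral>s. indicator A s * Jv s \<partial>M) + (\<integral>y. indicator A y * (v y * K y) \<partial>M)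
      = (\<integral>y. indicator A y * (Jv y + v y * K y) \<partial>M)"
    using i1 i3 by (simp add: algebra_simps)
  also have "\<dots> = Jop M a (\<lambda>y. Jv y + v y * K y) x"
    using x by (simp add: Jop_le A_def set_lebesgue_integral_def)
  finally show ?thesis unfolding Jv_def .
qed

end

context LS
begin

definition Gt :: "real \<Rightarrow> real" where "Gt y = G y - G a"

fun hfun :: "nat \<Rightarrow> real \<Rightarrow> real" where
  "hfun 0 = (\<lambda>y. 0)"
| "hfun (Suc 0) = (\<lambda>y. 1)"
| "hfun (Suc (Suc n)) = (\<lambda>y. Gt y ^ Suc n + hfun (Suc n) y * K y)"

lemma G_bounds: "g a \<le> G y \<and> G y \<le> g b"
  unfolding gext_def using ab by (intro conjI g_mono) auto

lemma bb_G: "bb G"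
  unfolding bb_def
proof (intro conjI)
  show "G \<in> borel_measurable borel" by (rule borel_measurable_mono[OF G_mono])
  show "\<exists>B. \<forall>x. \<bar>G x\<bar> \<le> B"
    using G_bounds by (intro exI[of _ "\<bar>g a\<bar> + \<bar>g b\<bar>"]) (smt (verit))
qed

lemma bb_Gt: "bb Gt"
  unfolding Gt_def by (intro bb_diff bb_G bb_const)

lemma Gt_bounds: "0 \<le> Gt y \<and> Gt y \<le> T"
  unfolding Gt_def using G_le[of a y] G_le[of y a] G_bounds[of y] G_eq[of a] ab
  by (cases "a \<le> y") (auto simp: G_below)

lemma Gt_meas: "a \<le> y \<Longrightarrow> Gt y = measure M {a..<y}"
  by (simp add: Gt_def measure_Ico)

lemma K_eq: "a \<le> y \<Longrightarrow> K y = Gt y + measure M {y}"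
proof -
  assume y: "a \<le> y"
  have e: "{a..y} = {a..<y} \<union> {y}" using y by auto
  have "measure M ({a..<y} \<union> {y}) = measure M {a..<y} + measure M {y}"
    by (rule fm.finite_measure_Union) (auto simp: sets_M)
  then have "K y = measure M {a..<y} + measure M {y}"
    unfolding K_def by (subst e)
  then show ?thesis using Gt_meas[OF y] by simp
qed

lemma K_bounds: "0 \<le> K y \<and> K y \<le> T"
  unfolding K_def using measure_le_T by auto

lemma Jop_cong: "a \<le> x \<Longrightarrow> (\<And>y. y \<in> {a..<x} \<Longrightarrow> q1 y = q2 y) \<Longrightarrow> Jop M a q1 x = Jop M a q2 x"
  by (simp add: Jop_le set_lebesgue_integral_def)
     (intro Bochner_Integration.integral_cong, auto simp: indicator_def)

lemma bb_hfun: "bb (hfun n)"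
proof (induction n rule: hfun.induct)
  case 1 then show ?case by simp
next
  case 2 then show ?case by simp
next
  case (3 n)
  then show ?case by (simp, intro bb_add bb_mult bb_power bb_Gt bb_K)
qed

lemma pow_J: "a \<le> x \<Longrightarrow> Gt x ^ Suc m = Jop M a (hfun (Suc m)) x"
proof (induction m arbitrary: x)
  case 0
  have "Jop M a (\<lambda>y. 1) x = measure M {a..<x}"
    using 0 by (simp add: Jop_le sets_M set_lebesgue_integral_def)
  then show ?case using Gt_meas[OF 0] by simp
next
  case (Suc m)
  have "Gt x ^ Suc (Suc m) = Gt x * Gt x ^ Suc m" by simp
  also have "\<dots> = measure M {a..<x} * Jop M a (hfun (Suc m)) x"
    using Suc.IH[OF Suc.prems] Gt_meas[OF Suc.prems] by simp
  also have "\<dots> = Jop M a (\<lambda>y. Jop M a (hfun (Suc m)) y + hfun (Suc m) y * K y) x"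
    by (rule prod_rule[OF bb_hfun Suc.prems])
  also have "\<dots> = Jop M a (hfun (Suc (Suc m))) x"
    using Suc by (intro Jop_cong) auto
  finally show ?case .
qed

lemma hfun_atomic:
  "\<exists>C\<ge>0. \<forall>y\<in>{a..<b}. \<bar>hfun (Suc m) y - real (Suc m) * Gt y ^ m\<bar> \<le> C * measure M {y}"
proof (induction m)
  case 0 then show ?case by (intro exI[of _ 0]) auto
next
  case (Suc m)
  then obtain C where C: "C \<ge> 0" "\<forall>y\<in>{a..<b}. \<bar>hfun (Suc m) y - real (Suc m) * Gt y ^ m\<bar> \<le> C * measure M {y}"
    by blast
  define C' where "C' = real (Suc m) * T ^ m + C * T"
  have "0 \<le> T" by (rule T_nonneg)
  then have C'0: "C' \<ge> 0" using C(1) by (simp add: C'_def)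
  have "\<bar>hfun (Suc (Suc m)) y - real (Suc (Suc m)) * Gt y ^ Suc m\<bar> \<le> C' * measure M {y}"
    if y: "y \<in> {a..<b}" for y
  proof -
    define d where "d = hfun (Suc m) y - real (Suc m) * Gt y ^ m"
    define D where "D = measure M {y}"
    have D0: "0 \<le> D" by (simp add: D_def)
    have Ky: "K y = Gt y + D" using y K_eq by (simp add: D_def)
    have eq: "hfun (Suc (Suc m)) y - real (Suc (Suc m)) * Gt y ^ Suc m
        = d * K y + real (Suc m) * Gt y ^ m * D"
      unfolding d_def by (simp add: Ky algebra_simps)
    have b1: "\<bar>d * K y\<bar> \<le> C * D * T"
    proof -
      have "\<bar>d * K y\<bar> = \<bar>d\<bar> * K y" using K_bounds[of y] by (simp add: abs_mult)
      also have "\<dots> \<le> (C * D) * T"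
        using C y K_bounds[of y] by (intro mult_mono) (auto simp: d_def D_def intro!: mult_nonneg_nonneg)
      finally show ?thesis .
    qed
    have b2: "\<bar>real (Suc m) * Gt y ^ m * D\<bar> \<le> real (Suc m) * T ^ m * D"
    proof -
      have "Gt y ^ m \<le> T ^ m" using Gt_bounds[of y] by (intro power_mono) auto
      moreover have "0 \<le> Gt y ^ m" using Gt_bounds[of y] by simp
      ultimately show ?thesis using D0 by (simp add: abs_mult mult_right_mono)
    qed
    have "\<bar>d * K y + real (Suc m) * Gt y ^ m * D\<bar> \<le> C * D * T + real (Suc m) * T ^ m * D"
      using b1 b2 by linarith
    also have "\<dots> = C' * D" by (simp add: C'_def algebra_simps)
    finally show ?thesis using eq by (simp add: D_def)
  qed
  then show ?case using C'0 by blast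
qed

end

context LS
begin

lemma V_atomic:
  assumes atoms: "\<And>z. z \<in> Dg a b g \<Longrightarrow> inV (indicator {z})"
    and d: "bb d" and C: "C \<ge> 0" "\<forall>y\<in>{a..<b}. \<bar>d y\<bar> \<le> C * measure M {y}"
  shows "inV d"
proof (rule V_lim[OF d])
  fix \<epsilon> :: real assume e: "\<epsilon> > 0"
  obtain \<delta> where dl: "\<delta> > 0" "\<delta>\<^sup>2 * T < \<epsilon>" using small_delta[OF e] by blast
  define \<eta> where "\<eta> = \<delta> / (C + 1)"
  have eta: "\<eta> > 0" using dl C by (simp add: \<eta>_def)
  have Ceta: "C * \<eta> \<le> \<delta>"
  proof -
    have "C * \<eta> = \<delta> * (C / (C + 1))" by (simp add: \<eta>_def)
    also have "\<dots> \<le> \<delta> * 1" using dl C by (intro mult_left_mono) auto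
    finally show ?thesis by simp
  qed
  define E where "E = {s \<in> {a..<b}. \<eta> \<le> measure M {s}}"
  have finE: "finite E" unfolding E_def by (rule big_atoms_finite[OF eta])
  define v where "v y = (\<Sum>z\<in>E. d z * indicator {z} y)" for y
  have bbv: "bb v"
    unfolding v_def by (intro bb_sum finE bb_cmult bb_ind) auto
  have inVv: "inV v"
    unfolding v_def
  proof (rule V_sum[OF finE])
    fix z assume z: "z \<in> E"
    then have "z \<in> Dg a b g" using eta by (auto simp: Dg_iff E_def)
    then have "inV (indicator {z})" by (rule atoms)
    then show "bb (\<lambda>y. d z * indicator {z} y) \<and> inV (\<lambda>y. d z * indicator {z} y)"
      using V_cmult[OF bb_ind] bb_cmult[OF bb_ind] by auto
  qed
  have veq: "v y = (if y \<in> E then d y else 0)" for y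
  proof -
    have "v y = (\<Sum>z\<in>E. if y = z then d z else 0)"
      unfolding v_def by (intro sum.cong) (auto simp: indicator_def)
    also have "\<dots> = (if y \<in> E then d y else 0)" using finE by (simp add: sum.delta)
    finally show ?thesis .
  qed
  have "R2 (\<lambda>y. d y - v y) \<le> (C * \<eta>)\<^sup>2 * T"
  proof (rule R2_unif[OF bb_diff[OF d bbv]])
    fix y assume y: "y \<in> {a..<b}"
    show "\<bar>d y - v y\<bar> \<le> C * \<eta>"
    proof (cases "y \<in> E")
      case True then show ?thesis using C eta by (simp add: veq)
    next
      case False
      then have "measure M {y} < \<eta>" using y by (auto simp: E_def)
      then have "C * measure M {y} \<le> C * \<eta>" using C by (intro mult_left_mono) auto
      moreover have "\<bar>d y\<bar> \<le> C * measure M {y}" using C(2) y by blast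
      ultimately show ?thesis using False by (simp add: veq)
    qed
  qed
  also have "\<dots> \<le> \<delta>\<^sup>2 * T"
    using Ceta C eta T_nonneg by (intro mult_right_mono power_mono) auto
  also have "\<dots> < \<epsilon>" by (rule dl(2))
  finally show "\<exists>v. bb v \<and> inV v \<and> R2 (\<lambda>x. d x - v x) < \<epsilon>" using bbv inVv by blast
qed

lemma pow_S:
  assumes atoms: "\<And>z. z \<in> Dg a b g \<Longrightarrow> inV (indicator {z})"
  shows "inS (\<lambda>x. Gt x ^ n)"
proof (induction n)
  case 0 then show ?case using S_Pg[OF Pg_const[OF ab]] by simp
next
  case (Suc m)
  have bbp: "bb (\<lambda>x. Gt x ^ m)" by (intro bb_power bb_Gt)
  have V1: "inV (\<lambda>x. real (Suc m) * Gt x ^ m)"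
    by (intro V_cmult bbp S_V Suc)
  obtain C where C: "C \<ge> 0" "\<forall>y\<in>{a..<b}. \<bar>hfun (Suc m) y - real (Suc m) * Gt y ^ m\<bar> \<le> C * measure M {y}"
    using hfun_atomic by blast
  have bbd: "bb (\<lambda>y. hfun (Suc m) y - real (Suc m) * Gt y ^ m)"
    by (intro bb_diff bb_hfun bb_cmult bbp)
  have V2: "inV (\<lambda>y. hfun (Suc m) y - real (Suc m) * Gt y ^ m)"
    by (rule V_atomic[OF atoms bbd C])
  have "inV (\<lambda>y. real (Suc m) * Gt y ^ m + (hfun (Suc m) y - real (Suc m) * Gt y ^ m))"
    by (rule V_add[OF bb_cmult[OF bbp] V1 bbd V2])
  then have "inV (hfun (Suc m))" by simp
  then have "inS (Jop M a (hfun (Suc m)))" by (rule J_S[OF bb_hfun])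
  then show ?case
  proof (rule S_cong)
    fix x assume "x \<in> {a..b}"
    then have "a \<le> x" by simp
    from pow_J[OF this, of m] show "Jop M a (hfun (Suc m)) x = Gt x ^ Suc m" by simp
  qed
qed

lemma poly_S:
  assumes atoms: "\<And>z. z \<in> Dg a b g \<Longrightarrow> inV (indicator {z})"
  shows "inS (\<lambda>x. \<Sum>i\<le>n. c i * Gt x ^ i)"
  by (intro S_sum S_cmult pow_S atoms) auto

lemma cont_S:
  assumes atoms: "\<And>z. z \<in> Dg a b g \<Longrightarrow> inV (indicator {z})"
    and Kc: "compact Kc" "Gt ` {a..b} \<subseteq> Kc" and F: "continuous_on Kc F"
  shows "inS (\<lambda>x. F (Gt x))"
  unfolding inS_def
proof (intro allI impI)
  fix \<epsilon> :: real assume e: "\<epsilon> > 0"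
  obtain P where P: "polynomial_function P" "\<forall>u\<in>Kc. norm (F u - P u) < \<epsilon> / 2"
    using Stone_Weierstrass_polynomial_function[OF Kc(1) F, of "\<epsilon> / 2"] e by auto
  obtain c n where Pc: "P = (\<lambda>x. \<Sum>i\<le>n. c i * x ^ i)"
    using P(1) unfolding real_polynomial_function_eq[symmetric] real_polynomial_function_iff_sum by blast
  obtain p where p: "p \<in> Pg a b g" "\<forall>x\<in>{a..b}. \<bar>(\<Sum>i\<le>n. c i * Gt x ^ i) - p x\<bar> < \<epsilon> / 2"
    using poly_S[OF atoms, of c n] e unfolding inS_def by (meson half_gt_zero)
  have "\<forall>x\<in>{a..b}. \<bar>F (Gt x) - p x\<bar> < \<epsilon>"
  proof
    fix x assume x: "x \<in> {a..b}"
    then have "Gt x \<in> Kc" using Kc(2) by auto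
    then have "\<bar>F (Gt x) - P (Gt x)\<bar> < \<epsilon> / 2" using P(2) by auto
    moreover have "\<bar>P (Gt x) - p x\<bar> < \<epsilon> / 2" using p(2) x Pc by auto
    ultimately show "\<bar>F (Gt x) - p x\<bar> < \<epsilon>" by linarith
  qed
  then show "\<exists>p\<in>Pg a b g. \<forall>x\<in>{a..b}. \<bar>F (Gt x) - p x\<bar> < \<epsilon>" using p(1) by blast
qed

lemma Gt_g: "x \<in> {a..b} \<Longrightarrow> y \<in> {a..b} \<Longrightarrow> Gt x - Gt y = g x - g y"
  by (simp add: Gt_def G_eq)

lemma UC_S:
  assumes atoms: "\<And>z. z \<in> Dg a b g \<Longrightarrow> inV (indicator {z})"
    and f: "f \<in> (UCg a b g :: (real \<Rightarrow> real) set)"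
  shows "inS f"
proof -
  have uc: "\<forall>\<epsilon>>0. \<exists>\<delta>>0. \<forall>x\<in>{a..b}. \<forall>y\<in>{a..b}. \<bar>g x - g y\<bar> < \<delta> \<longrightarrow> \<bar>f x - f y\<bar> < \<epsilon>"
    using f unfolding UCg_def by simp
  define S0 where "S0 = Gt ` {a..b}"
  define sel where "sel u = (SOME x. x \<in> {a..b} \<and> Gt x = u)" for u
  define \<Phi> where "\<Phi> u = f (sel u)" for u
  have sel: "sel (Gt x) \<in> {a..b} \<and> Gt (sel (Gt x)) = Gt x" if "x \<in> {a..b}" for x
    unfolding sel_def by (rule someI[of _ x]) (use that in auto)
  have same: "f x = f y" if "x \<in> {a..b}" "y \<in> {a..b}" "Gt x = Gt y" for x y
  proof (rule ccontr)
    assume ne: "f x \<noteq> f y"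
    then have "\<bar>f x - f y\<bar> > 0" by simp
    then obtain \<delta> where d: "\<delta> > 0" "\<forall>x'\<in>{a..b}. \<forall>y'\<in>{a..b}. \<bar>g x' - g y'\<bar> < \<delta> \<longrightarrow> \<bar>f x' - f y'\<bar> < \<bar>f x - f y\<bar>"
      using uc by blast
    have "g x - g y = 0" using Gt_g[OF that(1,2)] that(3) by simp
    then have "\<bar>g x - g y\<bar> < \<delta>" using d(1) by simp
    then have "\<bar>f x - f y\<bar> < \<bar>f x - f y\<bar>" using d(2) that(1,2) by blast
    then show False by simp
  qed
  have feq: "f x = \<Phi> (Gt x)" if "x \<in> {a..b}" for x
  proof -
    have "sel (Gt x) \<in> {a..b}" "Gt (sel (Gt x)) = Gt x" using sel[OF that] by auto
    from same[OF that this(1) this(2)[symmetric]] show ?thesis unfolding \<Phi>_def .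
  qed
  have ucP: "uniformly_continuous_on S0 \<Phi>"
    unfolding uniformly_continuous_on_def
  proof (intro allI impI)
    fix e :: real assume e: "e > 0"
    obtain \<delta> where d: "\<delta> > 0" "\<forall>x\<in>{a..b}. \<forall>y\<in>{a..b}. \<bar>g x - g y\<bar> < \<delta> \<longrightarrow> \<bar>f x - f y\<bar> < e"
      using uc e by blast
    show "\<exists>d>0. \<forall>x\<in>S0. \<forall>x'\<in>S0. dist x' x < d \<longrightarrow> dist (\<Phi> x') (\<Phi> x) < e"
    proof (intro exI[of _ \<delta>] conjI ballI impI)
      fix u u' assume u: "u \<in> S0" "u' \<in> S0" and du: "dist u' u < \<delta>"
      obtain x where x: "x \<in> {a..b}" "u = Gt x" using u(1) by (auto simp: S0_def)
      obtain y where y: "y \<in> {a..b}" "u' = Gt y" using u(2) by (auto simp: S0_def)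
      have "\<bar>g y - g x\<bar> < \<delta>" using du x y Gt_g[OF y(1) x(1)] by (simp add: dist_real_def)
      then have "\<bar>f y - f x\<bar> < e" using d x y by blast
      then show "dist (\<Phi> u') (\<Phi> u) < e" using feq x y by (simp add: dist_real_def)
    qed (rule d(1))
  qed
  obtain \<Phi>1 where \<Phi>1: "uniformly_continuous_on (closure S0) \<Phi>1" "\<And>u. u \<in> S0 \<Longrightarrow> \<Phi> u = \<Phi>1 u"
    using uniformly_continuous_on_extension_on_closure[OF ucP] by metis
  have bS0: "bounded S0"
    unfolding S0_def bounded_iff using Gt_bounds by (intro exI[of _ T]) auto
  have "inS (\<lambda>x. \<Phi>1 (Gt x))"
  proof (rule cont_S[OF atoms])
    show "compact (closure S0)" using bS0 by simp
    show "Gt ` {a..b} \<subseteq> closure S0" unfolding S0_def by (rule closure_subset)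
    show "continuous_on (closure S0) \<Phi>1" using \<Phi>1(1) by (rule uniformly_continuous_imp_continuous)
  qed
  then show "inS f"
  proof (rule S_cong)
    fix x assume "x \<in> {a..b}"
    then show "\<Phi>1 (Gt x) = f x" using feq \<Phi>1(2)[of "Gt x"] by (auto simp: S0_def)
  qed
qed

end

context LS
begin

lemma E_small:
  assumes x: "x \<in> {a..<b}" and eta: "\<eta> > 0"
  shows "measure M {y \<in> {a..<x}. g x - \<eta> < g y} \<le> \<eta>"
proof -
  define E where "E = {y \<in> {a..<x}. g x - \<eta> < g y}"
  have "measure M E \<le> \<eta>"
  proof (cases "E = {}")
    case True then show ?thesis using eta by simp
  next
    case False
    have bdd: "bdd_below E" unfolding E_def by (rule bdd_belowI[of _ a]) auto
    define s where "s = Inf E"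
    have sa: "a \<le> s" unfolding s_def using False by (intro cInf_greatest) (auto simp: E_def)
    have Es: "E \<subseteq> {s..<x}" unfolding s_def using bdd by (auto intro: cInf_lower simp: E_def)
    have up: "z \<in> E" if z: "s < z" "z < x" for z
    proof -
      obtain e where e: "e \<in> E" "e < z" using z(1) cInf_less_iff[OF False bdd] unfolding s_def by blast
      then have "g e \<le> g z" using x z by (intro g_mono) (auto simp: E_def)
      then show ?thesis using e z sa by (auto simp: E_def)
    qed
    have xb: "x \<in> {a..b}" using x by auto
    show ?thesis
    proof (cases "s \<in> E")
      case True
      have "measure M E \<le> measure M {s..<x}" using Es by (intro fm.finite_measure_mono) (auto simp: sets_M)
      also have "\<dots> = G x - G s" using True by (intro measure_Ico) (auto simp: E_def)
      also have "\<dots> < \<eta>" using True xb by (auto simp: E_def G_eq)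
      finally show ?thesis by simp
    next
      case sE: False
      have Es2: "E \<subseteq> {s<..<x}" using Es sE by (auto simp: order_le_less)
      show ?thesis
      proof (cases "s < x")
        case False
        then have "E = {}" using Es by auto
        then show ?thesis using eta by simp
      next
        case True
        have "G x - \<eta> \<le> G s + measure M {s}"
        proof (rule tendsto_lowerbound[OF G_right])
          show "\<forall>\<^sub>F z in at_right s. G x - \<eta> \<le> G z"
            unfolding eventually_at_right_field
          proof (intro exI[of _ x] conjI allI impI)
            fix z assume z: "s < z" "z < x"
            then have "z \<in> E" by (rule up)
            then have "g x - \<eta> < g z" by (simp add: E_def)
            moreover have "z \<in> {a..b}" "x \<in> {a..b}" using z sa x by auto
            ultimately show "G x - \<eta> \<le> G z" by (simp add: G_eq)
          qed (rule True)
        qed simp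
        have "measure M {s..<x} = measure M {s} + measure M {s<..<x}"
        proof -
          have "{s..<x} = {s} \<union> {s<..<x}" using True by auto
          moreover have "measure M ({s} \<union> {s<..<x}) = measure M {s} + measure M {s<..<x}"
            by (rule fm.finite_measure_Union) (auto simp: sets_M)
          ultimately show ?thesis by simp
        qed
        then have "measure M {s<..<x} = G x - G s - measure M {s}"
          using True by (simp add: measure_Ico)
        moreover have "measure M E \<le> measure M {s<..<x}"
          using Es2 by (intro fm.finite_measure_mono) (auto simp: sets_M)
        ultimately show ?thesis using \<open>G x - \<eta> \<le> G s + measure M {s}\<close> xb by (simp add: G_eq)
      qed
    qed
  qed
  then show ?thesis by (simp add: E_def)
qed


lemma max_lip: "\<bar>max 0 p - max 0 q\<bar> \<le> \<bar>p - q :: real\<bar>"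
  by (simp add: max_def abs_if)

lemma dense_atoms:
  assumes dense: "Pg_dense_UCg a b g TYPE('f::real_normed_field)" and x: "x \<in> Dg a b g"
  shows "in_L2_closure_Pg a b g (\<lambda>t. indicator {x} t :: 'f)"
  unfolding in_L2_closure_Pg_def
proof (intro allI impI)
  fix \<epsilon> :: real assume e: "\<epsilon> > 0"
  have xab: "x \<in> {a..<b}" and J: "measure M {x} > 0" using x Dg_iff by auto
  define \<eta> where "\<eta> = \<epsilon> / 4"
  have eta: "\<eta> > 0" using e by (simp add: \<eta>_def)
  obtain \<delta> where d: "\<delta> > 0" "\<delta>\<^sup>2 * T < \<epsilon> / 4" using small_delta[of "\<epsilon> / 4"] e by auto
  define f where "f y = (if y \<le> x then max 0 (1 - (G x - G y) / \<eta>) else 0)" for y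
  define E where "E = {y \<in> {a..<x}. g x - \<eta> < g y}"
  define F where "F y = (of_real (f y) :: 'f)" for y
  have Eb: "E \<in> sets borel"
  proof -
    have GB: "G \<in> borel_measurable borel" using bb_G by (simp add: bb_def)
    have "E = {a..<x} \<inter> {y \<in> space borel. g x - \<eta> < G y}"
      using xab by (auto simp: E_def G_eq)
    moreover have "{y \<in> space borel. g x - \<eta> < G y} \<in> sets borel"
      using GB unfolding borel_measurable_iff_greater by blast
    ultimately show ?thesis by simp
  qed
  have UC: "F \<in> UCg a b g"
    unfolding UCg_def
  proof (intro CollectI allI impI)
    fix e' :: real assume e': "e' > 0"
    show "\<exists>\<delta>>0. \<forall>y\<in>{a..b}. \<forall>z\<in>{a..b}. \<bar>g y - g z\<bar> < \<delta> \<longrightarrow> norm (F y - F z) < e'"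
    proof (intro exI[of _ "min (measure M {x}) (\<eta> * e')"] conjI ballI impI)
      show "0 < min (measure M {x}) (\<eta> * e')" using J eta e' by simp
      fix y z assume y: "y \<in> {a..b}" and z: "z \<in> {a..b}"
        and yz: "\<bar>g y - g z\<bar> < min (measure M {x}) (\<eta> * e')"
      have gG: "g y = G y" "g z = G z" using y z by (auto simp: G_eq)
      have nF: "norm (F y - F z) = \<bar>f y - f z\<bar>"
        unfolding F_def by (metis norm_of_real of_real_diff)
      have gap: False if "w \<le> x" "x < w'" "\<bar>G w - G w'\<bar> < measure M {x}" for w w'
      proof -
        have "measure M {x} \<le> G w' - G x" using atom_le[OF that(2)] .
        moreover have "G w \<le> G x" using G_le[OF that(1)] .
        ultimately show False using that(3) by linarith
      qed
      show "norm (F y - F z) < e'"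
      proof (cases "y \<le> x")
        case True
        show ?thesis
        proof (cases "z \<le> x")
          case True
          have "\<bar>f y - f z\<bar> \<le> \<bar>(1 - (G x - G y) / \<eta>) - (1 - (G x - G z) / \<eta>)\<bar>"
            using \<open>y \<le> x\<close> True unfolding f_def by (simp add: max_lip)
          also have "\<dots> = \<bar>G y - G z\<bar> / \<eta>"
          proof -
            have "(1 - (G x - G y) / \<eta>) - (1 - (G x - G z) / \<eta>) = (G y - G z) / \<eta>"
              using eta by (simp add: field_simps)
            then show ?thesis using eta by simp
          qed
          also have "\<dots> < e'" using yz gG eta by (simp add: field_simps)
          finally show ?thesis using nF by simp
        next
          case False
          then have "x < z" by simp
          with gap[OF \<open>y \<le> x\<close> this] yz gG show ?thesis by simp
        qed
      next
        case False
        show ?thesis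
        proof (cases "z \<le> x")
          case True
          from False have "x < y" by simp
          with gap[OF True this] yz gG show ?thesis by (simp add: abs_minus_commute)
        next
          case False
          then show ?thesis using \<open>\<not> y \<le> x\<close> nF e' by (simp add: f_def)
        qed
      qed
    qed
  qed
  obtain p where p: "p \<in> Pg a b g" "(SUP y\<in>{a..b}. ereal (norm (F y - p y))) < ereal \<delta>"
    using dense UC d(1) unfolding Pg_dense_UCg_def by blast
  have pd: "norm (F y - p y) < \<delta>" if "y \<in> {a..b}" for y
  proof -
    have "ereal (norm (F y - p y)) \<le> (SUP y\<in>{a..b}. ereal (norm (F y - p y)))"
      using that by (rule SUP_upper)
    then have "ereal (norm (F y - p y)) < ereal \<delta>" using p(2) by (rule le_less_trans)
    then show ?thesis by simp
  qed
  have fE: "\<bar>indicator {x} y - f y\<bar> \<le> indicator E y" if y: "y \<in> {a..<b}" for y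
  proof -
    consider "y = x" | "x < y" | "y < x" by linarith
    then show ?thesis
    proof cases
      case 1 then show ?thesis by (simp add: f_def indicator_def)
    next
      case 2 then show ?thesis by (simp add: f_def indicator_def)
    next
      case 3
      show ?thesis
      proof (cases "y \<in> E")
        case True
        have "f y \<le> 1" using 3 G_le[of y x] eta unfolding f_def by (simp add: max_def)
        moreover have "0 \<le> f y" unfolding f_def by simp
        ultimately show ?thesis using True 3 by (simp add: indicator_def)
      next
        case False
        then have "g y \<le> g x - \<eta>" using y 3 by (auto simp: E_def)
        then have "G y \<le> G x - \<eta>" using y xab by (simp add: G_eq)
        then have "1 - (G x - G y) / \<eta> \<le> 0" using eta by (simp add: field_simps)
        then have "f y = 0" using 3 by (simp add: f_def)
        then show ?thesis using 3 False by (simp add: indicator_def)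
      qed
    qed
  qed
  have pt: "(norm ((indicator {x} y :: 'f) - p y))\<^sup>2 * indicator {a..<b} y
      \<le> (2 * indicator E y + 2 * \<delta>\<^sup>2) * indicator {a..<b} y" for y
  proof (cases "y \<in> {a..<b}")
    case False then show ?thesis by simp
  next
    case True
    have "(indicator {x} y :: 'f) = of_real (indicator {x} y)" by (simp add: indicator_def)
    then have "norm ((indicator {x} y :: 'f) - F y) = \<bar>indicator {x} y - f y\<bar>"
      unfolding F_def by (metis norm_of_real of_real_diff)
    then have "norm ((indicator {x} y :: 'f) - F y) \<le> indicator E y" using fE[OF True] by simp
    moreover have "norm ((indicator {x} y :: 'f) - p y) \<le> norm ((indicator {x} y :: 'f) - F y) + norm (F y - p y)"
      using norm_triangle_ineq[of "(indicator {x} y :: 'f) - F y" "F y - p y"] by simp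
    moreover have "norm (F y - p y) < \<delta>" using True by (intro pd) auto
    ultimately have n: "norm ((indicator {x} y :: 'f) - p y) \<le> indicator E y + \<delta>" by linarith
    have "(norm ((indicator {x} y :: 'f) - p y))\<^sup>2 \<le> (indicator E y + \<delta>)\<^sup>2"
      using n by (intro power_mono) auto
    also have "\<dots> \<le> 2 * (indicator E y)\<^sup>2 + 2 * \<delta>\<^sup>2"
      using sum_squares_ge_zero[of "indicator E y - \<delta>" 0] by (simp add: power2_eq_square algebra_simps)
    also have "(indicator E y :: real)\<^sup>2 = indicator E y" by (simp add: indicator_def)
    finally show ?thesis using True by simp
  qed
  have bbE: "bb (\<lambda>y. (2 * indicator E y + 2 * \<delta>\<^sup>2) * indicator {a..<b} y)"
    by (intro bb_mult bb_add bb_cmult bb_ind bb_const Eb) auto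
  have "(\<integral>\<^sup>+ y. ennreal ((norm ((indicator {x} y :: 'f) - p y))\<^sup>2 * indicator {a..<b} y) \<partial>M)
      \<le> (\<integral>\<^sup>+ y. ennreal ((2 * indicator E y + 2 * \<delta>\<^sup>2) * indicator {a..<b} y) \<partial>M)"
    by (intro nn_integral_mono ennreal_leI pt)
  also have "\<dots> = ennreal (\<integral>y. (2 * indicator E y + 2 * \<delta>\<^sup>2) * indicator {a..<b} y \<partial>M)"
    by (rule nn_integral_eq_integral[OF bb_integrable[OF bbE]]) (simp add: indicator_def)
  finally have nn: "(\<integral>\<^sup>+ y. ennreal ((norm ((indicator {x} y :: 'f) - p y))\<^sup>2 * indicator {a..<b} y) \<partial>M)
      \<le> ennreal (\<integral>y. (2 * indicator E y + 2 * \<delta>\<^sup>2) * indicator {a..<b} y \<partial>M)" .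
  have "(\<integral>y. (2 * indicator E y + 2 * \<delta>\<^sup>2) * indicator {a..<b} y \<partial>M)
      = (\<integral>y. 2 * indicator E y + 2 * \<delta>\<^sup>2 * indicator {a..<b} y \<partial>M)"
  proof (intro Bochner_Integration.integral_cong refl)
    fix y
    have "E \<subseteq> {a..<b}" using xab by (auto simp: E_def)
    then show "(2 * indicator E y + 2 * \<delta>\<^sup>2) * indicator {a..<b} y = 2 * indicator E y + 2 * \<delta>\<^sup>2 * indicator {a..<b} y"
      by (auto simp: indicator_def)
  qed
  also have "\<dots> = 2 * measure M E + 2 * \<delta>\<^sup>2 * measure M {a..<b}"
  proof -
    have i1: "integrable M (\<lambda>y. indicator E y :: real)"
      by (intro integrable_real_indicator) (simp_all add: sets_M Eb)
    have i2: "integrable M (\<lambda>y. indicator {a..<b} y :: real)"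
      by (intro integrable_real_indicator) (auto simp: sets_M)
    have mE: "E \<in> sets M" by (simp add: sets_M Eb)
    show ?thesis using i1 i2 mE by (simp add: sets_M)
  qed
  also have "measure M {a..<b} = T" using ab by (simp add: measure_Ico G_eq)
  also have "2 * measure M E + 2 * \<delta>\<^sup>2 * T < \<epsilon>"
  proof -
    have "measure M E \<le> \<eta>" unfolding E_def by (rule E_small[OF xab eta])
    then show ?thesis using d(2) by (simp add: \<eta>_def)
  qed
  finally have "ennreal (\<integral>y. (2 * indicator E y + 2 * \<delta>\<^sup>2) * indicator {a..<b} y \<partial>M) < ennreal \<epsilon>"
    using e by (simp add: ennreal_lessI)
  with nn have "(\<integral>\<^sup>+ y. ennreal ((norm ((indicator {x} y :: 'f) - p y))\<^sup>2 * indicator {a..<b} y) \<partial>M) < ennreal \<epsilon>"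
    by (rule le_less_trans)
  then show "\<exists>p\<in>Pg a b g. (\<integral>\<^sup>+ y. ennreal ((norm ((indicator {x} y :: 'f) - p y))\<^sup>2 * indicator {a..<b} y) \<partial>M) < ennreal \<epsilon>"
    using p(1) by blast
qed

end

lemma atoms_c2r:
  assumes "in_L2_closure_Pg a b g (\<lambda>t. indicator {x} t :: complex)"
  shows "in_L2_closure_Pg a b g (\<lambda>t. indicator {x} t :: real)"
  unfolding in_L2_closure_Pg_def
proof (intro allI impI)
  fix \<epsilon> :: real assume e: "\<epsilon> > 0"
  obtain p where p: "p \<in> (Pg a b g :: (real \<Rightarrow> complex) set)"
    "(\<integral>\<^sup>+ t. ennreal ((norm ((indicator {x} t :: complex) - p t))\<^sup>2 * indicator {a..<b} t) \<partial>LS_measure a b g) < ennreal \<epsilon>"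
    using assms e unfolding in_L2_closure_Pg_def by blast
  have le: "(norm ((indicator {x} t :: real) - Re (p t)))\<^sup>2 * indicator {a..<b} t
      \<le> (norm ((indicator {x} t :: complex) - p t))\<^sup>2 * indicator {a..<b} t" for t
  proof -
    have "norm ((indicator {x} t :: real) - Re (p t)) = \<bar>Re ((indicator {x} t :: complex) - p t)\<bar>"
      by (simp add: indicator_def)
    also have "\<dots> \<le> norm ((indicator {x} t :: complex) - p t)" by (rule abs_Re_le_cmod)
    finally have "(norm ((indicator {x} t :: real) - Re (p t)))\<^sup>2 \<le> (norm ((indicator {x} t :: complex) - p t))\<^sup>2"
      by (intro power_mono) auto
    then show ?thesis by (simp add: indicator_def)
  qed
  have "(\<integral>\<^sup>+ t. ennreal ((norm ((indicator {x} t :: real) - Re (p t)))\<^sup>2 * indicator {a..<b} t) \<partial>LS_measure a b g)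
      \<le> (\<integral>\<^sup>+ t. ennreal ((norm ((indicator {x} t :: complex) - p t))\<^sup>2 * indicator {a..<b} t) \<partial>LS_measure a b g)"
    by (intro nn_integral_mono ennreal_leI le)
  also have "\<dots> < ennreal \<epsilon>" by (rule p(2))
  finally show "\<exists>p\<in>Pg a b g. (\<integral>\<^sup>+ t. ennreal ((norm ((indicator {x} t :: real) - p t))\<^sup>2 * indicator {a..<b} t) \<partial>LS_measure a b g) < ennreal \<epsilon>"
    by (intro bexI[where x="\<lambda>t. Re (p t)"] Pg_Re[OF p(1)])
qed

lemma SUP_lt:
  assumes "\<And>y. y \<in> A \<Longrightarrow> norm (h y) \<le> c" "c < \<epsilon>"
  shows "(SUP y\<in>A. ereal (norm (h y))) < ereal \<epsilon>"
proof -
  have "(SUP y\<in>A. ereal (norm (h y))) \<le> ereal c" using assms(1) by (intro SUP_least) auto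
  also have "\<dots> < ereal \<epsilon>" using assms(2) by simp
  finally show ?thesis .
qed

context LS
begin

lemma dense_real:
  assumes atoms: "\<forall>x\<in>Dg a b g. in_L2_closure_Pg a b g (\<lambda>t. indicator {x} t :: real)"
  shows "Pg_dense_UCg a b g TYPE(real)"
  unfolding Pg_dense_UCg_def
proof (intro ballI allI impI)
  have at: "\<And>z. z \<in> Dg a b g \<Longrightarrow> inV (indicator {z})" using atoms by (simp add: inV_def)
  fix f :: "real \<Rightarrow> real" and \<epsilon> :: real assume f: "f \<in> UCg a b g" and e: "\<epsilon> > 0"
  obtain p where p: "p \<in> Pg a b g" "\<forall>x\<in>{a..b}. \<bar>f x - p x\<bar> < \<epsilon> / 2"
    using UC_S[OF at f] e unfolding inS_def by (meson half_gt_zero)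
  have "(SUP x\<in>{a..b}. ereal (norm (f x - p x))) < ereal \<epsilon>"
    by (rule SUP_lt[where c="\<epsilon> / 2"]) (use p e in \<open>auto intro: less_imp_le\<close>)
  then show "\<exists>p\<in>Pg a b g. (SUP x\<in>{a..b}. ereal (norm (f x - p x))) < ereal \<epsilon>" using p(1) by blast
qed

lemma UC_Re: "f \<in> (UCg a b g :: (real \<Rightarrow> complex) set) \<Longrightarrow> (\<lambda>x. Re (f x)) \<in> (UCg a b g :: (real \<Rightarrow> real) set)"
  unfolding UCg_def
proof (intro CollectI allI impI, elim CollectE)
  fix e :: real assume e: "e > 0" and
    uc: "\<forall>\<epsilon>>0. \<exists>\<delta>>0. \<forall>x\<in>{a..b}. \<forall>y\<in>{a..b}. \<bar>g x - g y\<bar> < \<delta> \<longrightarrow> norm (f x - f y) < \<epsilon>"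
  then obtain \<delta> where d: "\<delta> > 0" "\<forall>x\<in>{a..b}. \<forall>y\<in>{a..b}. \<bar>g x - g y\<bar> < \<delta> \<longrightarrow> norm (f x - f y) < e"
    by blast
  show "\<exists>\<delta>>0. \<forall>x\<in>{a..b}. \<forall>y\<in>{a..b}. \<bar>g x - g y\<bar> < \<delta> \<longrightarrow> norm (Re (f x) - Re (f y)) < e"
  proof (intro exI[of _ \<delta>] conjI ballI impI)
    fix x y assume "x \<in> {a..b}" "y \<in> {a..b}" "\<bar>g x - g y\<bar> < \<delta>"
    then have "norm (f x - f y) < e" using d by blast
    moreover have "norm (Re (f x) - Re (f y)) \<le> norm (f x - f y)" using abs_Re_le_cmod[of "f x - f y"] by simp
    ultimately show "norm (Re (f x) - Re (f y)) < e" by linarith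
  qed (rule d(1))
qed

lemma UC_Im: "f \<in> (UCg a b g :: (real \<Rightarrow> complex) set) \<Longrightarrow> (\<lambda>x. Im (f x)) \<in> (UCg a b g :: (real \<Rightarrow> real) set)"
  unfolding UCg_def
proof (intro CollectI allI impI, elim CollectE)
  fix e :: real assume e: "e > 0" and
    uc: "\<forall>\<epsilon>>0. \<exists>\<delta>>0. \<forall>x\<in>{a..b}. \<forall>y\<in>{a..b}. \<bar>g x - g y\<bar> < \<delta> \<longrightarrow> norm (f x - f y) < \<epsilon>"
  then obtain \<delta> where d: "\<delta> > 0" "\<forall>x\<in>{a..b}. \<forall>y\<in>{a..b}. \<bar>g x - g y\<bar> < \<delta> \<longrightarrow> norm (f x - f y) < e"
    by blast
  show "\<exists>\<delta>>0. \<forall>x\<in>{a..b}. \<forall>y\<in>{a..b}. \<bar>g x - g y\<bar> < \<delta> \<longrightarrow> norm (Im (f x) - Im (f y)) < e"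
  proof (intro exI[of _ \<delta>] conjI ballI impI)
    fix x y assume "x \<in> {a..b}" "y \<in> {a..b}" "\<bar>g x - g y\<bar> < \<delta>"
    then have "norm (f x - f y) < e" using d by blast
    moreover have "norm (Im (f x) - Im (f y)) \<le> norm (f x - f y)" using abs_Im_le_cmod[of "f x - f y"] by simp
    ultimately show "norm (Im (f x) - Im (f y)) < e" by linarith
  qed (rule d(1))
qed

lemma dense_complex:
  assumes atoms: "\<forall>x\<in>Dg a b g. in_L2_closure_Pg a b g (\<lambda>t. indicator {x} t :: real)"
  shows "Pg_dense_UCg a b g TYPE(complex)"
  unfolding Pg_dense_UCg_def
proof (intro ballI allI impI)
  have at: "\<And>z. z \<in> Dg a b g \<Longrightarrow> inV (indicator {z})" using atoms by (simp add: inV_def)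
  fix f :: "real \<Rightarrow> complex" and \<epsilon> :: real assume f: "f \<in> UCg a b g" and e: "\<epsilon> > 0"
  have e4: "\<epsilon> / 4 > 0" using e by simp
  obtain p1 where p1: "p1 \<in> Pg a b g" "\<forall>x\<in>{a..b}. \<bar>Re (f x) - p1 x\<bar> < \<epsilon> / 4"
    using UC_S[OF at UC_Re[OF f]] e4 unfolding inS_def by blast
  obtain p2 where p2: "p2 \<in> Pg a b g" "\<forall>x\<in>{a..b}. \<bar>Im (f x) - p2 x\<bar> < \<epsilon> / 4"
    using UC_S[OF at UC_Im[OF f]] e4 unfolding inS_def by blast
  define P where "P x = complex_of_real (p1 x) + \<i> * complex_of_real (p2 x)" for x
  have PP: "P \<in> Pg a b g"
    unfolding P_def by (rule Pg_add[OF Pg_of_real[OF p1(1)] Pg_cmult[OF Pg_of_real[OF p2(1)]]])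
  have "(SUP x\<in>{a..b}. ereal (norm (f x - P x))) < ereal \<epsilon>"
  proof (rule SUP_lt[where c="\<epsilon> / 2"])
    fix x assume x: "x \<in> {a..b}"
    have "norm (f x - P x) \<le> \<bar>Re (f x - P x)\<bar> + \<bar>Im (f x - P x)\<bar>" by (rule cmod_le)
    also have "\<dots> = \<bar>Re (f x) - p1 x\<bar> + \<bar>Im (f x) - p2 x\<bar>" by (simp add: P_def)
    also have "\<dots> \<le> \<epsilon> / 2"
    proof -
      have "\<bar>Re (f x) - p1 x\<bar> < \<epsilon> / 4" "\<bar>Im (f x) - p2 x\<bar> < \<epsilon> / 4" using p1(2) p2(2) x by auto
      then show ?thesis by linarith
    qed
    finally show "norm (f x - P x) \<le> \<epsilon> / 2" .
  qed (use e in simp)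
  then show "\<exists>p\<in>Pg a b g. (SUP x\<in>{a..b}. ereal (norm (f x - p x))) < ereal \<epsilon>"
    by (intro bexI[where x=P] PP)
qed

end

theorem mainTheorem8:
  fixes a b :: real and g :: "real \<Rightarrow> real"
  assumes "derivator a b g"
  shows "(Pg_dense_UCg a b g TYPE(real) \<longleftrightarrow>
            (\<forall>x\<in>Dg a b g. in_L2_closure_Pg a b g (\<lambda>t. indicator {x} t :: real)))
       \<and> (Pg_dense_UCg a b g TYPE(complex) \<longleftrightarrow>
            (\<forall>x\<in>Dg a b g. in_L2_closure_Pg a b g (\<lambda>t. indicator {x} t :: complex)))"
proof (cases "a \<le> b")
  case True
  interpret LS a b g using assms True by unfold_locales
  show ?thesis
  proof (intro conjI iffI)
    show "\<forall>x\<in>Dg a b g. in_L2_closure_Pg a b g (\<lambda>t. indicator {x} t :: real)"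
      if "Pg_dense_UCg a b g TYPE(real)" using dense_atoms[OF that] by blast
    show "Pg_dense_UCg a b g TYPE(real)"
      if "\<forall>x\<in>Dg a b g. in_L2_closure_Pg a b g (\<lambda>t. indicator {x} t :: real)"
      using dense_real[OF that] .
    show "\<forall>x\<in>Dg a b g. in_L2_closure_Pg a b g (\<lambda>t. indicator {x} t :: complex)"
      if "Pg_dense_UCg a b g TYPE(complex)" using dense_atoms[OF that] by blast
    show "Pg_dense_UCg a b g TYPE(complex)"
      if "\<forall>x\<in>Dg a b g. in_L2_closure_Pg a b g (\<lambda>t. indicator {x} t :: complex)"
      using dense_complex that atoms_c2r by blast
  qed
next
  case False
  have D: "Dg a b g = {}" using False by (auto simp: Dg_def)
  have E: "{a..b} = {}" using False by simp
  have dR: "Pg_dense_UCg a b g TYPE(real)"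
    unfolding Pg_dense_UCg_def E by (auto intro!: bexI[where x="\<lambda>x. 0"] Pg_zero simp: bot_ereal_def)
  have dC: "Pg_dense_UCg a b g TYPE(complex)"
    unfolding Pg_dense_UCg_def E by (auto intro!: bexI[where x="\<lambda>x. 0"] Pg_zero simp: bot_ereal_def)
  show ?thesis using D dR dC by simp
qed


end
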